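(* Let $m\ge2$, $r\ge1$, let $\phi_1,\dots,\phi_r:\{0,\dots,m-1\}\to\mathbb{R}$, and let $\Phi:\Sigma_m^r\to\mathbb{R}$ be $\Phi(x^{(1)},\dots,x^{(r)})=\phi_1(x^{(1)}_1)\cdots\phi_r(x^{(r)}_1)$. For a probability vector $p=(p_0,\dots,p_{m-1})$ let $A(p)=\int_{\Sigma_m^r}\Phi\,d\mu_p^{\otimes r}$. Then $$A(p)=\prod_{k=1}^r\sum_{j=0}^{m-1}\phi_k(j)p_j,$$ and for any $\alpha$ with $E_\Phi(\alpha)\neq\emptyset$, $$h_{\rm top}(E_\Phi(\alpha))=\max_{A(p)=\alpha}H_1(p),$$ the maximum being over all probability vectors $p$ with $A(p)=\alpha$.
   Context: $\Sigma_m=\{0,\dots,m-1\}^{\mathbb{N}}$ with left shift $\sigma$; for $x\in\Sigma_m$, $x_1$ is its first coordinate. $\mu_p$ is the Bernoulli (product) measure on $\Sigma_m$ with marginal $p$, and $\mu_p^{\otimes r}$ the $r$-fold product. $H_1(p)=-\sum_{j=0}^{m-1}p_j\log p_j$ (with $0\log0=0$). $E_\Phi(\alpha)=\{x\in\Sigma_m:\lim_{n\to\infty}n^{-r}\sum_{1\le i_1,\dots,i_r\le n}\Phi(\sigma^{i_1}x,\dots,\sigma^{i_r}x)=\alpha\}$. $h_{\rm top}(Z)$ is Bowen's topological entropy of $Z\subset\Sigma_m$: with $d_n(x,y)=\max_{0\le j<n}d(\sigma^jx,\sigma^jy)$, $H^s_n(Z,\epsilon)=\inf\sum_ie^{-sn_i}$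 over countable covers of $Z$ by $d_{n_i}$-balls of radius $\epsilon$ with $n_i\ge n$, $H^s(Z,\epsilon)=\lim_nH^s_n(Z,\epsilon)$, $h_{\rm top}(Z,\epsilon)$ the critical $s$, $h_{\rm top}(Z)=\lim_{\epsilon\to0}h_{\rm top}(Z,\epsilon)$. *)

theory Defs
  imports "HOL-Probability.Probability"
begin

text \<open>Full shift on m symbols: sequences indexed by nat; coordinate 0 is the
  paper's first coordinate x_1.\<close>
definition Sigma :: "nat \<Rightarrow> (nat \<Rightarrow> nat) set" where
  "Sigma m = {x. \<forall>i. x i < m}"

definition shift :: "(nat \<Rightarrow> nat) \<Rightarrow> (nat \<Rightarrow> nat)" where
  "shift x = (\<lambda>i. x (Suc i))"

definition sdist :: "(nat \<Rightarrow> nat) \<Rightarrow> (nat \<Rightarrow> nat) \<Rightarrow> real" where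
  "sdist x y = (if x = y then 0 else (1/2) ^ (LEAST i. x i \<noteq> y i))"

definition bowen_dist :: "nat \<Rightarrow> (nat \<Rightarrow> nat) \<Rightarrow> (nat \<Rightarrow> nat) \<Rightarrow> real" where
  "bowen_dist n x y = Max (insert 0 ((\<lambda>j. sdist ((shift ^^ j) x) ((shift ^^ j) y)) ` {..<n}))"

definition bowen_ball :: "nat \<Rightarrow> nat \<Rightarrow> (nat \<Rightarrow> nat) \<Rightarrow> real \<Rightarrow> (nat \<Rightarrow> nat) set" where
  "bowen_ball m n x eps = {y \<in> Sigma m. bowen_dist n x y < eps}"

definition bowen_Hn :: "nat \<Rightarrow> (nat \<Rightarrow> nat) set \<Rightarrow> real \<Rightarrow> real \<Rightarrow> nat \<Rightarrow> ennreal" where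
  "bowen_Hn m Z s eps n =
     (INF C \<in> {C. countable C \<and> C \<subseteq> Sigma m \<times> {n..} \<and>
                  Z \<subseteq> (\<Union>(x,k)\<in>C. bowen_ball m k x eps)}.
        (\<Sum>\<^sub>\<infinity>(x,k)\<in>C. ennreal (exp (- s * real k))))"

text \<open>H^s(Z,eps) = lim_n H^s_n(Z,eps) (nondecreasing in n).\<close>
definition bowen_H :: "nat \<Rightarrow> (nat \<Rightarrow> nat) set \<Rightarrow> real \<Rightarrow> real \<Rightarrow> ennreal" where
  "bowen_H m Z s eps = lim (\<lambda>n. bowen_Hn m Z s eps n)"

definition htop_eps :: "nat \<Rightarrow> (nat \<Rightarrow> nat) set \<Rightarrow> real \<Rightarrow> ereal" where
  "htop_eps m Z eps = Inf {ereal s | s. bowen_H m Z s eps = 0}"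

definition htop :: "nat \<Rightarrow> (nat \<Rightarrow> nat) set \<Rightarrow> ereal" where
  "htop m Z = Lim (at_right 0) (\<lambda>eps. htop_eps m Z eps)"

definition prob_vec :: "nat \<Rightarrow> (nat \<Rightarrow> real) \<Rightarrow> bool" where
  "prob_vec m p \<longleftrightarrow> (\<forall>j<m. 0 \<le> p j) \<and> (\<Sum>j<m. p j) = 1"

definition H1 :: "nat \<Rightarrow> (nat \<Rightarrow> real) \<Rightarrow> real" where
  "H1 m p = - (\<Sum>j<m. if p j = 0 then 0 else p j * ln (p j))"

definition bernoulli :: "nat \<Rightarrow> (nat \<Rightarrow> real) \<Rightarrow> (nat \<Rightarrow> nat) measure" where
  "bernoulli m p = PiM UNIV (\<lambda>_. density (count_space {..<m}) (\<lambda>j. ennreal (p j)))"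

text \<open>Phi(x^(1),...,x^(r)) = prod_k phi_k(x^(k)_1); phi indexed by k < r.\<close>
definition Phi :: "nat \<Rightarrow> (nat \<Rightarrow> nat \<Rightarrow> real) \<Rightarrow> (nat \<Rightarrow> nat \<Rightarrow> nat) \<Rightarrow> real" where
  "Phi r phi xs = (\<Prod>k<r. phi k (xs k 0))"

definition Aint :: "nat \<Rightarrow> nat \<Rightarrow> (nat \<Rightarrow> nat \<Rightarrow> real) \<Rightarrow> (nat \<Rightarrow> real) \<Rightarrow> real" where
  "Aint m r phi p = integral\<^sup>L (PiM {..<r} (\<lambda>_. bernoulli m p)) (Phi r phi)"

definition E_level :: "nat \<Rightarrow> nat \<Rightarrow> (nat \<Rightarrow> nat \<Rightarrow> real) \<Rightarrow> real \<Rightarrow> (nat \<Rightarrow> nat) set" where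
  "E_level m r phi alpha = {x \<in> Sigma m.
     (\<lambda>n. (1 / real n ^ r) *
        (\<Sum>i\<in>PiE {..<r} (\<lambda>_. {1..n}). Phi r phi (\<lambda>k. (shift ^^ (i k)) x)))
     \<longlonglongrightarrow> alpha}"

end

theory Submission
  imports Defs "HOL-Real_Asymp.Real_Asymp"
begin

definition bmarg :: "nat \<Rightarrow> (nat \<Rightarrow> real) \<Rightarrow> nat measure" where
  "bmarg m p = density (count_space {..<m}) (\<lambda>j. ennreal (p j))"

lemma bernoulli_alt: "bernoulli m p = PiM UNIV (\<lambda>_. bmarg m p)"
  by (simp add: bernoulli_def bmarg_def)

lemma prob_space_bmarg:
  assumes "prob_vec m p" shows "prob_space (bmarg m p)"
proof
  have "emeasure (bmarg m p) (space (bmarg m p)) = (\<Sum>j<m. ennreal (p j))"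
    unfolding bmarg_def
    by (simp add: emeasure_density nn_integral_count_space_finite)
  also have "\<dots> = ennreal (\<Sum>j<m. p j)"
    using assms by (intro sum_ennreal) (auto simp: prob_vec_def)
  also have "\<dots> = 1" using assms by (simp add: prob_vec_def)
  finally show "emeasure (bmarg m p) (space (bmarg m p)) = 1" .
qed

lemma prob_space_bernoulli:
  assumes "prob_vec m p" shows "prob_space (bernoulli m p)"
  unfolding bernoulli_alt by (rule prob_space_PiM) (rule prob_space_bmarg[OF assms])

lemma space_bmarg[simp]: "space (bmarg m p) = {..<m}"
  by (simp add: bmarg_def)
lemma sets_bmarg[simp]: "sets (bmarg m p) = Pow {..<m}"
  by (simp add: bmarg_def)

lemma space_bernoulli: "space (bernoulli m p) = Sigma m"
  by (auto simp: bernoulli_alt space_PiM Sigma_def PiE_def Pi_def extensional_def)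

lemma integral_bmarg:
  fixes f :: "nat \<Rightarrow> real"
  assumes "prob_vec m p"
  shows "integral\<^sup>L (bmarg m p) f = (\<Sum>j<m. f j * p j)"
proof -
  have "integral\<^sup>L (bmarg m p) f = integral\<^sup>L (count_space {..<m}) (\<lambda>j. p j *\<^sub>R f j)"
    unfolding bmarg_def
    by (rule integral_density) (use assms in \<open>auto simp: prob_vec_def\<close>)
  also have "\<dots> = (\<Sum>j<m. p j * f j)"
    by (simp add: lebesgue_integral_count_space_finite)
  finally show ?thesis by (simp add: mult.commute)
qed

lemma integral_bernoulli_coord0:
  fixes f :: "nat \<Rightarrow> real"
  assumes "prob_vec m p"
  shows "integral\<^sup>L (bernoulli m p) (\<lambda>x. f (x 0)) = (\<Sum>j<m. f j * p j)"
proof -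
  interpret bm: prob_space "bmarg m p" using prob_space_bmarg[OF assms] .
  interpret product_prob_space "\<lambda>_. bmarg m p" UNIV by unfold_locales
  have "integral\<^sup>L (bernoulli m p) (\<lambda>x. f (x 0)) =
        integral\<^sup>L (distr (PiM UNIV (\<lambda>_. bmarg m p)) (bmarg m p) (\<lambda>\<omega>. \<omega> (0::nat))) f"
    unfolding bernoulli_alt
    by (subst integral_distr) (auto intro: measurable_component_singleton simp: bmarg_def)
  also have "\<dots> = integral\<^sup>L (bmarg m p) f" by (simp add: PiM_component)
  finally show ?thesis using integral_bmarg[OF assms] by simp
qed

lemma integrable_bernoulli_coord0:
  fixes f :: "nat \<Rightarrow> real"
  assumes "prob_vec m p"
  shows "integrable (bernoulli m p) (\<lambda>x. f (x 0))"
proof -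
  interpret bm: prob_space "bmarg m p" using prob_space_bmarg[OF assms] .
  interpret product_prob_space "\<lambda>_. bmarg m p" UNIV by unfold_locales
  have "integrable (bmarg m p) f"
    by (rule bm.integrable_const_bound[where B="\<Sum>j<m. \<bar>f j\<bar>"])
       (auto simp: bmarg_def intro!: AE_I2 member_le_sum)
  then have "integrable (distr (PiM UNIV (\<lambda>_. bmarg m p)) (bmarg m p) (\<lambda>\<omega>. \<omega> (0::nat))) f"
    by (simp add: PiM_component)
  then show ?thesis unfolding bernoulli_alt
    by (subst (asm) integrable_distr_eq) (auto intro: measurable_component_singleton simp: bmarg_def)
qed

lemma Aint_eq:
  assumes "prob_vec m p"
  shows "Aint m r phi p = (\<Prod>k<r. \<Sum>j<m. phi k j * p j)"
proof -
  interpret bm: prob_space "bernoulli m p" using prob_space_bernoulli[OF assms] .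
  interpret product_sigma_finite "\<lambda>_. bernoulli m p" by unfold_locales
  have "Aint m r phi p = (\<integral>xs. (\<Prod>k\<in>{..<r}. (\<lambda>k x. phi k (x 0)) k (xs k)) \<partial>PiM {..<r} (\<lambda>_. bernoulli m p))"
    by (simp add: Aint_def Phi_def[abs_def])
  also have "\<dots> = (\<Prod>k\<in>{..<r}. integral\<^sup>L (bernoulli m p) (\<lambda>x. phi k (x 0)))"
    by (rule product_integral_prod) (auto intro: integrable_bernoulli_coord0[OF assms])
  also have "\<dots> = (\<Prod>k<r. \<Sum>j<m. phi k j * p j)"
    by (simp add: integral_bernoulli_coord0[OF assms])
  finally show ?thesis .
qed


definition cnt :: "nat \<Rightarrow> (nat \<Rightarrow> nat) \<Rightarrow> nat \<Rightarrow> nat" where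
  "cnt n x j = card {i \<in> {1..n}. x i = j}"

definition fr :: "nat \<Rightarrow> (nat \<Rightarrow> nat) \<Rightarrow> nat \<Rightarrow> real" where
  "fr n x j = real (cnt n x j) / real n"

definition Fp :: "nat \<Rightarrow> nat \<Rightarrow> (nat \<Rightarrow> nat \<Rightarrow> real) \<Rightarrow> (nat \<Rightarrow> real) \<Rightarrow> real" where
  "Fp m r phi q = (\<Prod>k<r. \<Sum>j<m. phi k j * q j)"

lemma H1_alt: "H1 m p = - (\<Sum>j<m. p j * ln (p j))"
  unfolding H1_def by (intro arg_cong[where f=uminus] sum.cong) auto

lemma sum_fiber:
  fixes f :: "nat \<Rightarrow> real"
  assumes "finite I" "x ` I \<subseteq> {..<m}"
  shows "(\<Sum>i\<in>I. f (x i)) = (\<Sum>j<m. f j * real (card {i\<in>I. x i = j}))"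
proof -
  have "(\<Sum>i\<in>I. f (x i)) = (\<Sum>j<m. \<Sum>i\<in>{i\<in>I. x i = j}. f (x i))"
    by (rule sum.group[symmetric]) (use assms in auto)
  also have "\<dots> = (\<Sum>j<m. f j * real (card {i\<in>I. x i = j}))"
    by (intro sum.cong refl) (simp add: mult.commute)
  finally show ?thesis .
qed

lemma prod_fiber:
  fixes f :: "nat \<Rightarrow> real"
  assumes "finite I" "x ` I \<subseteq> {..<m}"
  shows "(\<Prod>i\<in>I. f (x i)) = (\<Prod>j<m. f j ^ (card {i\<in>I. x i = j}))"
proof -
  have "(\<Prod>i\<in>I. f (x i)) = (\<Prod>j<m. \<Prod>i\<in>{i\<in>I. x i = j}. f (x i))"
    by (rule prod.group[symmetric]) (use assms in auto)
  also have "\<dots> = (\<Prod>j<m. f j ^ (card {i\<in>I. x i = j}))"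
    by (intro prod.cong refl) simp
  finally show ?thesis .
qed

lemma sum_cnt:
  assumes "x \<in> Sigma m"
  shows "(\<Sum>j<m. cnt n x j) = n"
proof -
  have xi: "x ` {1..n} \<subseteq> {..<m}" using assms by (auto simp: Sigma_def)
  have "(\<Sum>j<m. real (cnt n x j)) = (\<Sum>i\<in>{1..n}. (\<lambda>_. 1::real) (x i))"
    using sum_fiber[OF _ xi, of "\<lambda>_. 1"] by (simp add: cnt_def)
  then have "real (\<Sum>j<m. cnt n x j) = real n" by simp
  then show ?thesis by linarith
qed

lemma fr_prob_vec:
  assumes "x \<in> Sigma m" "n \<ge> 1"
  shows "prob_vec m (fr n x)"
proof -
  have "(\<Sum>j<m. fr n x j) = (\<Sum>j<m. real (cnt n x j)) / real n"
    by (simp add: fr_def sum_divide_distrib)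
  also have "(\<Sum>j<m. real (cnt n x j)) = real n"
    using sum_cnt[OF assms(1), of n] by (metis of_nat_sum)
  finally show ?thesis using assms(2) by (auto simp: prob_vec_def fr_def)
qed

lemma fr_le1:
  assumes "n \<ge> 1" shows "fr n x j \<le> 1"
proof -
  have "cnt n x j \<le> card {1..n}" unfolding cnt_def by (rule card_mono) auto
  then show ?thesis using assms by (simp add: fr_def)
qed

lemma fr_nonneg: "fr n x j \<ge> 0" by (simp add: fr_def)

lemma E_term:
  assumes "x \<in> Sigma m" "n \<ge> 1"
  shows "(1 / real n ^ r) * (\<Sum>i\<in>PiE {..<r} (\<lambda>_. {1..n}). Phi r phi (\<lambda>k. (shift ^^ (i k)) x))
         = Fp m r phi (fr n x)"
proof -
  have sh: "(shift ^^ i) x 0 = x i" for i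
    by (induction i arbitrary: x) (simp_all add: shift_def funpow_Suc_right del: funpow.simps)
  have "(\<Sum>i\<in>PiE {..<r} (\<lambda>_. {1..n}). Phi r phi (\<lambda>k. (shift ^^ (i k)) x))
       = (\<Sum>i\<in>PiE {..<r} (\<lambda>_. {1..n}). \<Prod>k<r. phi k (x (i k)))"
    by (simp add: Phi_def sh)
  also have "\<dots> = (\<Prod>k<r. \<Sum>i\<in>{1..n}. phi k (x i))"
    by (rule prod_sum_PiE[symmetric]) auto
  finally have 1: "(\<Sum>i\<in>PiE {..<r} (\<lambda>_. {1..n}). Phi r phi (\<lambda>k. (shift ^^ (i k)) x))
       = (\<Prod>k<r. \<Sum>i\<in>{1..n}. phi k (x i))" .
  have xi: "x ` {1..n} \<subseteq> {..<m}" using assms by (auto simp: Sigma_def)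
  have 2: "(\<Sum>i\<in>{1..n}. phi k (x i)) / real n = (\<Sum>j<m. phi k j * fr n x j)" for k
    using sum_fiber[OF _ xi, of "phi k"]
    by (simp add: cnt_def fr_def sum_divide_distrib[symmetric])
  have "(1 / real n ^ r) * (\<Prod>k<r. \<Sum>i\<in>{1..n}. phi k (x i))
        = (\<Prod>k<r. (\<Sum>i\<in>{1..n}. phi k (x i)) / real n)"
    by (simp add: prod_dividef)
  also have "\<dots> = Fp m r phi (fr n x)" unfolding Fp_def by (rule prod.cong[OF refl 2])
  finally show ?thesis using 1 by simp
qed

lemma E_level_alt:
  "E_level m r phi alpha = {x \<in> Sigma m. (\<lambda>n. Fp m r phi (fr n x)) \<longlonglongrightarrow> alpha}"
proof -
  have "(\<lambda>n. (1 / real n ^ r) * (\<Sum>i\<in>PiE {..<r} (\<lambda>_. {1..n}). Phi r phi (\<lambda>k. (shift ^^ (i k)) x))) \<longlonglongrightarrow> alpha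
        \<longleftrightarrow> (\<lambda>n. Fp m r phi (fr n x)) \<longlonglongrightarrow> alpha" if "x \<in> Sigma m" for x
    by (rule tendsto_cong) (use E_term[OF that] in \<open>auto simp: eventually_at_top_linorder intro!: exI[of _ 1]\<close>)
  then show ?thesis unfolding E_level_def by blast
qed

lemma coord_subseq:
  fixes q :: "nat \<Rightarrow> nat \<Rightarrow> real" and m :: nat
  assumes "\<And>n j. j < m \<Longrightarrow> q n j \<in> {0..1::real}"
  shows "\<exists>r l. strict_mono r \<and> (\<forall>j<m. (\<lambda>n. q (r n) j) \<longlonglongrightarrow> l j)"
  using assms
proof (induction m)
  case 0
  then show ?case by (auto intro!: exI[of _ id] simp: strict_mono_def)
next
  case (Suc m)
  then obtain r l where r: "strict_mono r" and l: "\<forall>j<m. (\<lambda>n. q (r n) j) \<longlonglongrightarrow> l j" by force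
  have "\<forall>n. (\<lambda>n. q (r n) m) n \<in> {0..1}" using Suc.prems by auto
  then obtain a r' where a: "a \<in> {0..1}" and r': "strict_mono r'"
    and lim: "((\<lambda>n. q (r n) m) \<circ> r') \<longlonglongrightarrow> a"
    using seq_compactE[OF compact_imp_seq_compact[OF compact_Icc]] by metis
  show ?case
  proof (intro exI conjI allI impI)
    show "strict_mono (r \<circ> r')" using r r' by (rule strict_mono_o)
    fix j assume "j < Suc m"
    show "(\<lambda>n. q ((r \<circ> r') n) j) \<longlonglongrightarrow> (l(m := a)) j"
    proof (cases "j = m")
      case True then show ?thesis using lim by (simp add: comp_def)
    next
      case False
      with \<open>j < Suc m\<close> have "j < m" by simp
      then show ?thesis using LIMSEQ_subseq_LIMSEQ[OF l[rule_format, OF \<open>j<m\<close>] r'] False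
        by (simp add: comp_def)
    qed
  qed
qed

lemma prob_vec_limit:
  assumes "\<And>n. prob_vec m (q n)" "\<forall>j<m. (\<lambda>n. q n j) \<longlonglongrightarrow> l j"
  shows "prob_vec m l"
proof -
  have "\<forall>j<m. 0 \<le> l j"
    using assms by (auto intro!: LIMSEQ_le_const simp: prob_vec_def)
  moreover have "(\<lambda>n. \<Sum>j<m. q n j) \<longlonglongrightarrow> (\<Sum>j<m. l j)"
    using assms(2) by (intro tendsto_sum) auto
  then have "(\<Sum>j<m. l j) = 1" using assms(1) by (simp add: prob_vec_def LIMSEQ_const_iff)
  ultimately show ?thesis by (simp add: prob_vec_def)
qed

lemma Fp_limit:
  assumes "\<forall>j<m. (\<lambda>n. q n j) \<longlonglongrightarrow> l j"
  shows "(\<lambda>n. Fp m r phi (q n)) \<longlonglongrightarrow> Fp m r phi l"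
  unfolding Fp_def using assms by (intro tendsto_prod tendsto_sum tendsto_mult tendsto_const) auto

lemma xlnx_cont: "continuous_on {0..} (\<lambda>t::real. t * ln t)"
proof -
  have "continuous (at t within {0..}) (\<lambda>t::real. t * ln t)" if "t \<ge> 0" for t
  proof (cases "t = 0")
    case True
    have "((\<lambda>t::real. t * ln t) \<longlongrightarrow> 0) (at_right 0)" by real_asymp
    then have "((\<lambda>t::real. t * ln t) \<longlongrightarrow> 0) (at 0 within {0..})"
      by (simp add: at_within_Ici_at_right)
    then show ?thesis using True by (simp add: continuous_within)
  next
    case False
    then have "isCont (\<lambda>t::real. t * ln t) t" using that
      by (intro continuous_intros) auto
    then show ?thesis by (rule continuous_at_imp_continuous_at_within)
  qed
  then show ?thesis by (simp add: continuous_on_eq_continuous_within)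
qed

lemma xlnx_limit:
  assumes "X \<longlonglongrightarrow> (l::real)" "\<And>n. X n \<ge> 0"
  shows "(\<lambda>n. X n * ln (X n)) \<longlonglongrightarrow> l * ln l"
proof -
  have "l \<ge> 0" using assms by (intro LIMSEQ_le_const) auto
  then show ?thesis
    using continuous_on_tendsto_compose[OF xlnx_cont assms(1)] assms(2) by simp
qed

lemma H1_limit:
  assumes "\<forall>j<m. (\<lambda>n. q n j) \<longlonglongrightarrow> l j" "\<And>n j. j < m \<Longrightarrow> q n j \<ge> 0"
  shows "(\<lambda>n. H1 m (q n)) \<longlonglongrightarrow> H1 m l"
  unfolding H1_alt using assms by (intro tendsto_minus tendsto_sum xlnx_limit) auto


lemma prob_vec_01: "prob_vec m q \<Longrightarrow> j < m \<Longrightarrow> q j \<in> {0..1}"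
proof -
  assume q: "prob_vec m q" and j: "j < m"
  have "q j \<le> (\<Sum>i<m. q i)"
    using q j by (intro member_le_sum) (auto simp: prob_vec_def)
  then show ?thesis using q j by (auto simp: prob_vec_def)
qed

lemma H1_le: assumes "prob_vec m q" shows "H1 m q \<le> real m"
proof -
  have "- (q j * ln (q j)) \<le> 1" if "j < m" for j
  proof (cases "q j = 0")
    case False
    with prob_vec_01[OF assms that] have qp: "q j > 0" "q j \<le> 1" by auto
    have "ln (1 / q j) \<le> 1 / q j - 1" using qp by (intro ln_le_minus_one) auto
    then have "- ln (q j) \<le> 1 / q j - 1" using qp by (simp add: ln_div)
    then have "q j * (- ln (q j)) \<le> q j * (1 / q j - 1)" using qp by (intro mult_left_mono) auto
    moreover have "q j * (1 / q j - 1) = 1 - q j" using qp by (simp add: field_simps)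
    ultimately show ?thesis using qp by linarith
  qed simp
  then have "(\<Sum>j<m. - (q j * ln (q j))) \<le> (\<Sum>j<m. 1)" by (intro sum_mono) auto
  then show ?thesis by (simp add: H1_alt sum_negf)
qed

lemma K_nonempty:
  assumes "x \<in> Sigma m" "(\<lambda>n. Fp m r phi (fr n x)) \<longlonglongrightarrow> alpha"
  shows "\<exists>q. prob_vec m q \<and> Fp m r phi q = alpha"
proof -
  define Q where "Q n = fr (Suc n) x" for n
  have pv: "prob_vec m (Q n)" for n unfolding Q_def by (rule fr_prob_vec[OF assms(1)]) simp
  obtain s l where s: "strict_mono s" and l: "\<forall>j<m. (\<lambda>n. Q (s n) j) \<longlonglongrightarrow> l j"
    using coord_subseq[of m Q] prob_vec_01[OF pv] by blast
  have "prob_vec m l" using prob_vec_limit[of m "\<lambda>n. Q (s n)" l] pv l by blast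
  moreover have "(\<lambda>n. Fp m r phi (Q (s n))) \<longlonglongrightarrow> Fp m r phi l" using Fp_limit[OF l] .
  moreover have "(\<lambda>n. Fp m r phi (Q n)) \<longlonglongrightarrow> alpha"
    unfolding Q_def using assms(2) by (rule LIMSEQ_Suc)
  then have "(\<lambda>n. Fp m r phi (Q (s n))) \<longlonglongrightarrow> alpha"
    using LIMSEQ_subseq_LIMSEQ[OF _ s] by (simp add: comp_def)
  ultimately show ?thesis using LIMSEQ_unique by blast
qed

lemma maximizer_exists:
  assumes "\<exists>q. prob_vec m q \<and> Fp m r phi q = alpha"
  shows "\<exists>p. prob_vec m p \<and> Fp m r phi p = alpha \<and>
            (\<forall>q. prob_vec m q \<and> Fp m r phi q = alpha \<longrightarrow> H1 m q \<le> H1 m p)"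
proof -
  define K where "K = {q. prob_vec m q \<and> Fp m r phi q = alpha}"
  define h where "h = Sup (H1 m ` K)"
  have Kne: "K \<noteq> {}" using assms by (auto simp: K_def)
  have bdd: "bdd_above (H1 m ` K)" using H1_le by (auto simp: K_def bdd_above_def)
  have "\<exists>q\<in>K. h - 1 / real (Suc n) < H1 m q" for n
  proof -
    have "h - 1 / real (Suc n) < Sup (H1 m ` K)" by (simp add: h_def)
    then show ?thesis using Kne bdd by (subst (asm) less_cSup_iff) auto
  qed
  then obtain Q where Q: "\<And>n. Q n \<in> K" "\<And>n. h - 1 / real (Suc n) < H1 m (Q n)" by metis
  have pv: "prob_vec m (Q n)" for n using Q by (auto simp: K_def)
  obtain s l where s: "strict_mono s" and l: "\<forall>j<m. (\<lambda>n. Q (s n) j) \<longlonglongrightarrow> l j"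
    using coord_subseq[of m Q] prob_vec_01[OF pv] by blast
  have lpv: "prob_vec m l" using prob_vec_limit[of m "\<lambda>n. Q (s n)" l] pv l by blast
  have "(\<lambda>n. Fp m r phi (Q (s n))) \<longlonglongrightarrow> Fp m r phi l" using Fp_limit[OF l] .
  moreover have "Fp m r phi (Q (s n)) = alpha" for n using Q by (auto simp: K_def)
  ultimately have lF: "Fp m r phi l = alpha" by (simp add: LIMSEQ_const_iff)
  have lK: "l \<in> K" using lpv lF by (simp add: K_def)
  have H: "(\<lambda>n. H1 m (Q (s n))) \<longlonglongrightarrow> H1 m l"
    using H1_limit[of m "\<lambda>n. Q (s n)" l] l pv by (auto simp: prob_vec_def)
  have lim2: "(\<lambda>n. h - 1 / real (Suc (s n))) \<longlonglongrightarrow> h - 0"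
    by (intro tendsto_diff tendsto_const LIMSEQ_subseq_LIMSEQ[OF _ s, unfolded comp_def]
        lim_const_over_n[THEN LIMSEQ_Suc, unfolded of_nat_Suc[symmetric]] ) 
  have "h \<le> H1 m l"
  proof -
    have lim2': "(\<lambda>n. h - 1 / real (Suc (s n))) \<longlonglongrightarrow> h" using lim2 by simp
    have "\<exists>N. \<forall>n\<ge>N. h - 1 / real (Suc (s n)) \<le> H1 m (Q (s n))"
      using Q(2) by (intro exI[of _ 0] allI impI less_imp_le)
    then show ?thesis using LIMSEQ_le[OF lim2' H] by blast
  qed
  moreover have "H1 m q \<le> h" if "q \<in> K" for q unfolding h_def using bdd that by (intro cSup_upper) auto
  ultimately have "\<forall>q. prob_vec m q \<and> Fp m r phi q = alpha \<longrightarrow> H1 m q \<le> H1 m l"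
    unfolding K_def by force
  then show ?thesis using lpv lF by blast
qed

lemma uniform_entropy:
  assumes max: "\<forall>q. prob_vec m q \<and> Fp m r phi q = alpha \<longrightarrow> H1 m q \<le> h" and "\<delta> > 0"
  shows "\<exists>\<eta>>0. \<forall>q. prob_vec m q \<and> \<bar>Fp m r phi q - alpha\<bar> < \<eta> \<longrightarrow> H1 m q < h + \<delta>"
proof (rule ccontr)
  assume neg: "\<not> ?thesis"
  have "\<exists>q. prob_vec m q \<and> \<bar>Fp m r phi q - alpha\<bar> < 1 / real (Suc n) \<and> H1 m q \<ge> h + \<delta>" for n
  proof -
    have pos: "1 / real (Suc n) > 0" by simp
    from neg have "\<not> (\<forall>q. prob_vec m q \<and> \<bar>Fp m r phi q - alpha\<bar> < 1 / real (Suc n) \<longrightarrow> H1 m q < h + \<delta>)"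
      using pos by blast
    then show ?thesis by (auto simp: not_less)
  qed
  then obtain Q where Q: "\<And>n. prob_vec m (Q n)" "\<And>n. \<bar>Fp m r phi (Q n) - alpha\<bar> < 1 / real (Suc n)"
     "\<And>n. H1 m (Q n) \<ge> h + \<delta>" by metis
  obtain s l where s: "strict_mono s" and l: "\<forall>j<m. (\<lambda>n. Q (s n) j) \<longlonglongrightarrow> l j"
    using coord_subseq[of m Q] prob_vec_01[OF Q(1)] by blast
  have lpv: "prob_vec m l" using prob_vec_limit[of m "\<lambda>n. Q (s n)" l] Q(1) l by blast
  have F1: "(\<lambda>n. Fp m r phi (Q (s n))) \<longlonglongrightarrow> Fp m r phi l" using Fp_limit[OF l] .
  have "(\<lambda>n. Fp m r phi (Q n)) \<longlonglongrightarrow> alpha"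
  proof (rule LIMSEQ_I)
    fix e :: real assume "e > 0"
    then obtain N where N: "1 / real (Suc N) < e"
      using reals_Archimedean[of e] by (auto simp: inverse_eq_divide)
    show "\<exists>N. \<forall>n\<ge>N. norm (Fp m r phi (Q n) - alpha) < e"
    proof (intro exI allI impI)
      fix n assume "n \<ge> N"
      then have "1 / real (Suc n) \<le> 1 / real (Suc N)" by (intro divide_left_mono) auto
      then show "norm (Fp m r phi (Q n) - alpha) < e" using Q(2)[of n] N by simp
    qed
  qed
  then have "(\<lambda>n. Fp m r phi (Q (s n))) \<longlonglongrightarrow> alpha"
    using LIMSEQ_subseq_LIMSEQ[OF _ s] by (simp add: comp_def)
  with F1 have "Fp m r phi l = alpha" using LIMSEQ_unique by blast
  then have "H1 m l \<le> h" using max lpv by blast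
  moreover have "(\<lambda>n. H1 m (Q (s n))) \<longlonglongrightarrow> H1 m l"
    using H1_limit[of m "\<lambda>n. Q (s n)" l] l Q(1) by (auto simp: prob_vec_def)
  then have "H1 m l \<ge> h + \<delta>" using Q(3) by (intro LIMSEQ_le_const) auto
  ultimately show False using \<open>\<delta> > 0\<close> by simp
qed


lemma cnt_ge_m: "x ` {1..n} \<subseteq> {..<m} \<Longrightarrow> j \<ge> m \<Longrightarrow> cnt n x j = 0"
proof -
  assume a: "x ` {1..n} \<subseteq> {..<m}" "j \<ge> m"
  have "{i \<in> {1..n}. x i = j} = {}"
  proof (rule ccontr)
    assume "{i \<in> {1..n}. x i = j} \<noteq> {}"
    then obtain i where "i \<in> {1..n}" "x i = j" by blast
    then show False using a by force
  qed
  then show ?thesis unfolding cnt_def by simp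
qed

lemma prod_fr_self:
  assumes "x ` {1..L} \<subseteq> {..<m}" "L \<ge> 1"
  shows "(\<Prod>i\<in>{1..L}. fr L x (x i)) = exp (- real L * H1 m (fr L x))"
proof -
  have "(\<Prod>i\<in>{1..L}. fr L x (x i)) = (\<Prod>j<m. fr L x j ^ cnt L x j)"
    using prod_fiber[OF _ assms(1)] by (simp add: cnt_def)
  also have "\<dots> = (\<Prod>j<m. exp (real L * (fr L x j * ln (fr L x j))))"
  proof (intro prod.cong refl)
    fix j assume "j \<in> {..<m}"
    show "fr L x j ^ cnt L x j = exp (real L * (fr L x j * ln (fr L x j)))"
    proof (cases "cnt L x j = 0")
      case True then show ?thesis by (simp add: fr_def)
    next
      case False
      then have pos: "fr L x j > 0" using assms by (simp add: fr_def)
      have "real L * fr L x j = real (cnt L x j)" using assms by (simp add: fr_def)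
      then have "exp (real L * (fr L x j * ln (fr L x j))) = exp (real (cnt L x j) * ln (fr L x j))"
        by (simp add: mult.assoc[symmetric])
      also have "\<dots> = fr L x j ^ cnt L x j" using pos by (simp add: exp_of_nat_mult)
      finally show ?thesis by simp
    qed
  qed
  also have "\<dots> = exp (- real L * H1 m (fr L x))"
    by (simp add: exp_sum[symmetric] H1_alt sum_distrib_left sum_negf)
  finally show ?thesis .
qed

lemma sum_words_prod:
  assumes "prob_vec m v"
  shows "(\<Sum>w\<in>PiE {..<L+c+1} (\<lambda>_. {..<m}). \<Prod>i\<in>{1..L}. v (w i)) = real m ^ (c+1)"
proof -
  have "(\<Sum>w\<in>PiE {..<L+c+1} (\<lambda>_. {..<m}). \<Prod>i\<in>{1..L}. v (w i))
      = (\<Sum>w\<in>PiE {..<L+c+1} (\<lambda>_. {..<m}). \<Prod>i<L+c+1. (if i \<in> {1..L} then v (w i) else 1))"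
  proof (intro sum.cong refl)
    fix w
    have "(\<Prod>i<L+c+1. (if i \<in> {1..L} then v (w i) else 1)) = (\<Prod>i\<in>{1..L}. (if i \<in> {1..L} then v (w i) else 1))"
      by (rule prod.mono_neutral_right) auto
    also have "\<dots> = (\<Prod>i\<in>{1..L}. v (w i))" by simp
    finally show "(\<Prod>i\<in>{1..L}. v (w i)) = (\<Prod>i<L+c+1. (if i \<in> {1..L} then v (w i) else 1))" by simp
  qed
  also have "\<dots> = (\<Prod>i<L+c+1. \<Sum>a<m. (if i \<in> {1..L} then v a else 1))"
    by (rule prod_sum_PiE[symmetric]) auto
  also have "\<dots> = (\<Prod>i<L+c+1. (if i \<in> {1..L} then 1 else real m))"
    using assms by (intro prod.cong refl) (auto simp: prob_vec_def)
  also have "\<dots> = (\<Prod>i\<in>{..<L+c+1} - {1..L}. (if i \<in> {1..L} then 1 else real m))"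
    by (rule prod.mono_neutral_left[symmetric]) auto
  also have "\<dots> = (\<Prod>i\<in>{..<L+c+1} - {1..L}. real m)"
    by (rule prod.cong) auto
  also have "\<dots> = real m ^ card ({..<L+c+1} - {1..L})"
    by (rule prod_constant)
  also have "card ({..<L+c+1} - {1..L}) = c + 1"
  proof -
    have "card ({..<L+c+1} - {1..L}) = card {..<L+c+1} - card {1..L}"
      by (rule card_Diff_subset) auto
    then show ?thesis by simp
  qed
  finally show ?thesis .
qed

lemma card_types:
  "card ((\<lambda>w. fr L w) ` {w\<in>PiE {..<L+c+1} (\<lambda>_. {..<m}). P w}) \<le> (L+1)^m"
proof -
  have "(\<lambda>w. fr L w) ` {w\<in>PiE {..<L+c+1} (\<lambda>_. {..<m}). P w}
        \<subseteq> (\<lambda>cv j. if j < m then real (cv j) / real L else 0) ` (PiE {..<m} (\<lambda>_. {..L}))"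
  proof
    fix v assume "v \<in> (\<lambda>w. fr L w) ` {w\<in>PiE {..<L+c+1} (\<lambda>_. {..<m}). P w}"
    then obtain w where w: "w \<in> PiE {..<L+c+1} (\<lambda>_. {..<m})" and v: "v = fr L w" by auto
    have wi: "w ` {1..L} \<subseteq> {..<m}" using w by (auto simp: PiE_def Pi_def)
    define cv where "cv = (\<lambda>j\<in>{..<m}. cnt L w j)"
    have "cnt L w j \<le> L" for j
    proof -
      have "cnt L w j \<le> card {1..L}" unfolding cnt_def by (rule card_mono) auto
      then show ?thesis by simp
    qed
    then have "cv \<in> PiE {..<m} (\<lambda>_. {..L})" by (auto simp: cv_def)
    moreover have "v = (\<lambda>j. if j < m then real (cv j) / real L else 0)"
      using cnt_ge_m[OF wi] by (auto simp: v fr_def cv_def)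
    ultimately show "v \<in> (\<lambda>cv j. if j < m then real (cv j) / real L else 0) ` (PiE {..<m} (\<lambda>_. {..L}))"
      by blast
  qed
  then have "card ((\<lambda>w. fr L w) ` {w\<in>PiE {..<L+c+1} (\<lambda>_. {..<m}). P w})
        \<le> card ((\<lambda>cv j. if j < m then real (cv j) / real L else 0) ` (PiE {..<m} (\<lambda>_. {..L})))"
    by (intro card_mono finite_imageI finite_PiE) auto
  also have "\<dots> \<le> card (PiE {..<m} (\<lambda>_. {..L}))" by (rule card_image_le) (auto intro: finite_PiE)
  also have "\<dots> = (L+1)^m" by (simp add: card_PiE)
  finally show ?thesis .
qed

lemma word_count:
  assumes "L \<ge> 1"
  shows "real (card {w\<in>PiE {..<L+c+1} (\<lambda>_. {..<m}). H1 m (fr L w) \<le> t})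
         \<le> real m ^ (c+1) * real (L+1)^m * exp (real L * t)"
proof -
  define W where "W = {w\<in>PiE {..<L+c+1} (\<lambda>_. {..<m}). H1 m (fr L w) \<le> t}"
  define T where "T = (\<lambda>w. fr L w) ` W"
  have finW: "finite W" unfolding W_def
    by (rule finite_subset[of _ "PiE {..<L+c+1} (\<lambda>_. {..<m})"]) (auto intro: finite_PiE)
  have wi: "w ` {1..L} \<subseteq> {..<m}" if "w \<in> W" for w using that by (auto simp: W_def PiE_def Pi_def)
  have "real (card W) * exp (- real L * t) = (\<Sum>w\<in>W. exp (- real L * t))" by simp
  also have "\<dots> \<le> (\<Sum>w\<in>W. \<Prod>i\<in>{1..L}. fr L w (w i))"
  proof (rule sum_mono)
    fix w assume "w \<in> W"
    then have "H1 m (fr L w) \<le> t" by (simp add: W_def)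
    then have "exp (- real L * t) \<le> exp (- real L * H1 m (fr L w))" by (simp add: mult_left_mono)
    then show "exp (- real L * t) \<le> (\<Prod>i\<in>{1..L}. fr L w (w i))"
      using prod_fr_self[OF wi[OF \<open>w\<in>W\<close>] assms] by simp
  qed
  also have "\<dots> = (\<Sum>v\<in>T. \<Sum>w\<in>{w\<in>W. fr L w = v}. \<Prod>i\<in>{1..L}. v (w i))"
    unfolding T_def by (subst sum.group[symmetric, of W "(\<lambda>w. fr L w) ` W" "\<lambda>w. fr L w"]) (auto intro!: sum.cong simp: finW)
  also have "\<dots> \<le> (\<Sum>v\<in>T. real m ^ (c+1))"
  proof (rule sum_mono)
    fix v assume "v \<in> T"
    then obtain w0 where w0: "w0 \<in> W" "v = fr L w0" by (auto simp: T_def)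
    have pv: "prob_vec m v"
      using w0 fr_prob_vec[of w0 m L] assms wi[OF w0(1)] cnt_ge_m
      unfolding prob_vec_def
    proof -
      have "(\<Sum>j<m. real (cnt L w0 j)) = real L"
        using sum_fiber[OF _ wi[OF w0(1)], of "\<lambda>_. 1"] by (simp add: cnt_def)
      then show "(\<forall>j<m. 0 \<le> v j) \<and> sum v {..<m} = 1"
        using assms by (simp add: w0 fr_def sum_divide_distrib[symmetric])
    qed
    have "(\<Sum>w\<in>{w\<in>W. fr L w = v}. \<Prod>i\<in>{1..L}. v (w i))
          \<le> (\<Sum>w\<in>PiE {..<L+c+1} (\<lambda>_. {..<m}). \<Prod>i\<in>{1..L}. v (w i))"
      using pv by (intro sum_mono2 finite_PiE prod_nonneg) (auto simp: W_def prob_vec_def PiE_def Pi_def)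
    also have "\<dots> = real m ^ (c+1)" by (rule sum_words_prod[OF pv])
    finally show "(\<Sum>w\<in>{w\<in>W. fr L w = v}. \<Prod>i\<in>{1..L}. v (w i)) \<le> real m ^ (c+1)" .
  qed
  also have "\<dots> = real (card T) * real m ^ (c+1)" by simp
  also have "\<dots> \<le> real ((L+1)^m) * real m ^ (c+1)"
  proof -
    have "card T \<le> (L+1)^m" using card_types[of L c m "\<lambda>w. H1 m (fr L w) \<le> t"] by (simp add: T_def W_def)
    then have "real (card T) \<le> real ((L+1)^m)" by (simp only: of_nat_le_iff)
    then show ?thesis by (intro mult_right_mono) auto
  qed
  finally have "real (card W) * exp (- real L * t) \<le> real ((L+1)^m) * real m ^ (c+1)" .
  then have "real (card W) \<le> real ((L+1)^m) * real m ^ (c+1) / exp (- real L * t)"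
    by (simp add: le_divide_eq)
  then show ?thesis by (simp add: W_def exp_minus field_simps)
qed


lemma shift_pow: "(shift ^^ j) y = (\<lambda>i. y (i + j))"
  by (induction j arbitrary: y) (simp_all add: shift_def funpow_Suc_right del: funpow.simps)

lemma bowen_dist_less:
  assumes "eps > 0" "\<And>j. j < L \<Longrightarrow> sdist ((shift ^^ j) y) ((shift ^^ j) z) < eps"
  shows "bowen_dist L y z < eps"
  unfolding bowen_dist_def using assms by (subst Max_less_iff) auto

lemma bowen_dist_ge:
  assumes "j < L"
  shows "sdist ((shift ^^ j) y) ((shift ^^ j) z) \<le> bowen_dist L y z"
  unfolding bowen_dist_def using assms by (intro Max_ge) auto

lemma ball_contains:
  assumes "z \<in> Sigma m" "eps > 0" "(1/2::real)^c < eps" "\<And>i. i < L+c+1 \<Longrightarrow> y i = z i"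
  shows "z \<in> bowen_ball m L y eps"
proof -
  have "sdist ((shift ^^ j) y) ((shift ^^ j) z) < eps" if j: "j < L" for j
  proof (cases "(shift ^^ j) y = (shift ^^ j) z")
    case True then show ?thesis using assms by (simp add: sdist_def)
  next
    case False
    define k where "k = (LEAST i. (shift ^^ j) y i \<noteq> (shift ^^ j) z i)"
    have ex: "\<exists>i. (shift ^^ j) y i \<noteq> (shift ^^ j) z i" using False by auto
    have k1: "(shift ^^ j) y k \<noteq> (shift ^^ j) z k" unfolding k_def using ex by (rule LeastI_ex)
    have "k \<ge> c" 
    proof (rule ccontr)
      assume "\<not> c \<le> k"
      then have "k + j < L + c + 1" using j by simp
      then show False using k1 assms(4) by (simp add: shift_pow)
    qed
    then have "(1/2::real)^k \<le> (1/2)^c" by (intro power_decreasing) auto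
    then have "(1/2::real)^k < eps" using assms(3) by linarith
    then show ?thesis using False by (simp add: sdist_def k_def)
  qed
  then show ?thesis using assms by (auto simp: bowen_ball_def intro!: bowen_dist_less)
qed

lemma ball_subset_cyl:
  assumes "eps \<le> 1" "z \<in> bowen_ball m L y eps" "i < L"
  shows "z i = y i"
proof (rule ccontr)
  assume ne: "z i \<noteq> y i"
  have "sdist ((shift ^^ i) y) ((shift ^^ i) z) \<le> bowen_dist L y z" by (rule bowen_dist_ge[OF assms(3)])
  also have "\<dots> < eps" using assms(2) by (simp add: bowen_ball_def)
  finally have lt: "sdist ((shift ^^ i) y) ((shift ^^ i) z) < 1" using assms(1) by simp
  have "(LEAST k. (shift ^^ i) y k \<noteq> (shift ^^ i) z k) = 0"
    using ne by (intro Least_equality) (auto simp: shift_pow)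
  moreover have "(shift ^^ i) y \<noteq> (shift ^^ i) z" using ne by (auto simp: shift_pow dest: fun_cong[of _ _ 0])
  ultimately show False using lt by (simp add: sdist_def)
qed


lemma Hn_mono: "n \<le> n' \<Longrightarrow> bowen_Hn m Z s eps n \<le> bowen_Hn m Z s eps n'"
  unfolding bowen_Hn_def by (rule INF_superset_mono) auto

lemma bowen_H_SUP: "bowen_H m Z s eps = (SUP n. bowen_Hn m Z s eps n)"
proof -
  have "incseq (\<lambda>n. bowen_Hn m Z s eps n)" by (auto simp: incseq_def intro: Hn_mono)
  then show ?thesis unfolding bowen_H_def by (intro limI LIMSEQ_SUP)
qed

lemma half_pow_sum: "(\<Sum>N\<le>K. (1/2::real)^(Suc N)) = 1 - (1/2)^(Suc K)"
  by (induction K) (auto simp: field_simps)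

lemma Hn_small:
  assumes m: "m \<ge> 1" and eps: "eps > 0" and EZ: "E \<subseteq> Sigma m" and d: "\<delta> > 0"
  and good: "\<And>x. x \<in> E \<Longrightarrow> \<exists>N. \<forall>n\<ge>N. H1 m (fr n x) \<le> h + \<delta>"
  and s: "s = h + 2*\<delta>" and e: "e > 0"
  shows "bowen_Hn m E s eps n0 \<le> ennreal e"
proof -
  obtain c where c: "(1/2::real)^c < eps" using real_arch_pow_inv[OF eps, of "1/2"] by auto
  define g where "g L = real m ^ (c+1) * (real (L+1)^m * exp (- \<delta> * real L))" for L :: nat
  have g0: "g \<longlonglongrightarrow> 0"
  proof -
    have "(\<lambda>L::nat. real (L+1)^m * exp (- \<delta> * real L)) \<longlonglongrightarrow> 0" using d by real_asymp
    from tendsto_mult[OF tendsto_const this, of "real m ^ (c+1)"] show ?thesis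
      unfolding g_def by simp
  qed
  have "\<exists>L. L \<ge> max n0 N + 1 \<and> g L < e / 2^(Suc N)" for N
  proof -
    have "eventually (\<lambda>L. g L < e / 2^(Suc N)) sequentially" using order_tendstoD(2)[OF g0] e by simp
    moreover have "eventually (\<lambda>L. L \<ge> max n0 N + 1) sequentially" by (rule eventually_ge_at_top)
    ultimately have "eventually (\<lambda>L. L \<ge> max n0 N + 1 \<and> g L < e / 2^(Suc N)) sequentially"
      by (rule eventually_conj[rotated])
    then obtain K where "\<forall>L\<ge>K. L \<ge> max n0 N + 1 \<and> g L < e / 2^(Suc N)"
      unfolding eventually_sequentially by blast
    then show ?thesis by blast
  qed
  then obtain Lf where Lf: "\<And>N. Lf N \<ge> max n0 N + 1" "\<And>N. g (Lf N) < e / 2^(Suc N)" by metis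
  define W where "W N = {w\<in>PiE {..<Lf N+c+1} (\<lambda>_. {..<m}). H1 m (fr (Lf N) w) \<le> h + \<delta>}" for N
  define cen where "cen N w = (\<lambda>i. if i < Lf N+c+1 then w i else 0)" for N and w :: "nat \<Rightarrow> nat"
  define A where "A N = (\<lambda>w. (cen N w, Lf N)) ` W N" for N
  define C where "C = (\<Union>N. A N)"
  have finW: "finite (W N)" for N unfolding W_def
    by (rule finite_subset[of _ "PiE {..<Lf N+c+1} (\<lambda>_. {..<m})"]) (auto intro: finite_PiE)
  have finA: "finite (A N)" for N unfolding A_def using finW by simp
  have cardA: "real (card (A N)) \<le> real m ^ (c+1) * real (Lf N+1)^m * exp (real (Lf N) * (h + \<delta>))" for N
  proof -
    have "card (A N) \<le> card (W N)" unfolding A_def by (rule card_image_le[OF finW])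
    then have "real (card (A N)) \<le> real (card (W N))" by simp
    also have "\<dots> \<le> real m ^ (c+1) * real (Lf N+1)^m * exp (real (Lf N) * (h + \<delta>))"
      using word_count[of "Lf N" c m "h+\<delta>"] Lf(1)[of N] by (simp add: W_def)
    finally show ?thesis .
  qed
  have Cc: "countable C" unfolding C_def by (rule countable_UN) (auto intro: countable_finite finA)
  have Csub: "C \<subseteq> Sigma m \<times> {n0..}"
  proof
    fix z assume "z \<in> C"
    then obtain N w where w: "w \<in> W N" "z = (cen N w, Lf N)" by (auto simp: C_def A_def)
    have "cen N w \<in> Sigma m" using w(1) m by (auto simp: cen_def Sigma_def W_def PiE_def Pi_def)
    moreover have "Lf N \<ge> n0" using Lf(1)[of N] by simp
    ultimately show "z \<in> Sigma m \<times> {n0..}" using w by simp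
  qed
  have Ecov: "E \<subseteq> (\<Union>(x,k)\<in>C. bowen_ball m k x eps)"
  proof
    fix x assume xE: "x \<in> E"
    then have xS: "x \<in> Sigma m" using EZ by auto
    obtain N where N: "\<forall>n\<ge>N. H1 m (fr n x) \<le> h + \<delta>" using good[OF xE] by blast
    define w where "w = restrict x {..<Lf N+c+1}"
    have "fr (Lf N) w = fr (Lf N) x"
    proof -
      have eq: "{i \<in> {1..Lf N}. w i = j} = {i \<in> {1..Lf N}. x i = j}" for j by (auto simp: w_def)
      show ?thesis
      proof (rule ext)
        fix j show "fr (Lf N) w j = fr (Lf N) x j" unfolding fr_def cnt_def by (simp only: eq)
      qed
    qed
    moreover have "Lf N \<ge> N" using Lf(1)[of N] by simp
    ultimately have "H1 m (fr (Lf N) w) \<le> h + \<delta>" using N by simp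
    moreover have "w \<in> PiE {..<Lf N+c+1} (\<lambda>_. {..<m})" using xS by (auto simp: w_def Sigma_def)
    ultimately have wW: "w \<in> W N" by (simp add: W_def)
    have "x \<in> bowen_ball m (Lf N) (cen N w) eps"
      by (rule ball_contains[OF xS eps c]) (simp add: cen_def w_def)
    moreover have "(cen N w, Lf N) \<in> C" using wW by (auto simp: C_def A_def)
    ultimately show "x \<in> (\<Union>(x,k)\<in>C. bowen_ball m k x eps)" by blast
  qed
  define f where "f = (\<lambda>(x::nat\<Rightarrow>nat,k::nat). exp (- s * real k))"
  have sumA: "sum f (A N) \<le> e / 2^(Suc N)" for N
  proof -
    have "sum f (A N) = (\<Sum>z\<in>A N. exp (- s * real (Lf N)))"
      by (intro sum.cong refl) (auto simp: A_def f_def)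
    also have "\<dots> = real (card (A N)) * exp (- s * real (Lf N))" by simp
    also have "\<dots> \<le> real m ^ (c+1) * real (Lf N+1)^m * exp (real (Lf N) * (h + \<delta>)) * exp (- s * real (Lf N))"
      by (intro mult_right_mono cardA) auto
    also have "\<dots> = g (Lf N)"
    proof -
      have "exp (real (Lf N) * (h + \<delta>)) * exp (- s * real (Lf N)) = exp (- \<delta> * real (Lf N))"
        by (simp add: exp_add[symmetric] s algebra_simps)
      then show ?thesis unfolding g_def by (simp add: mult.assoc)
    qed
    also have "\<dots> \<le> e / 2^(Suc N)" using Lf(2)[of N] by simp
    finally show ?thesis .
  qed
  have sumle: "(\<Sum>\<^sub>\<infinity>(x,k)\<in>C. ennreal (exp (- s * real k))) \<le> ennreal e"
  proof -
    have "(\<Sum>\<^sub>\<infinity>(x,k)\<in>C. ennreal (exp (- s * real k))) =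
          (SUP F\<in>{F. finite F \<and> F \<subseteq> C}. sum (\<lambda>(x,k). ennreal (exp (- s * real k))) F)"
      by (rule nonneg_infsum_complete) auto
    also have "\<dots> \<le> ennreal e"
    proof (rule SUP_least)
      fix F assume "F \<in> {F. finite F \<and> F \<subseteq> C}"
      then have F: "finite F" "F \<subseteq> C" by auto
      have "\<forall>z\<in>F. \<exists>N. z \<in> A N" using F(2) by (auto simp: C_def)
      then obtain Nf where Nf: "\<And>z. z \<in> F \<Longrightarrow> z \<in> A (Nf z)" by metis
      define K where "K = Max (Nf ` F)"
      have Kb: "Nf z \<le> K" if "z \<in> F" for z unfolding K_def using F(1) that by (intro Max_ge) auto
      have "sum f F \<le> sum (f \<circ> snd) (SIGMA N:{..K}. A N)"
      proof (rule sum_le_included[where i=snd])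
        show "finite (SIGMA N:{..K}. A N)" using finA by auto
        show "\<forall>y\<in>(SIGMA N:{..K}. A N). 0 \<le> (f \<circ> snd) y" by (auto simp: f_def)
        show "\<forall>x\<in>F. \<exists>y\<in>(SIGMA N:{..K}. A N). snd y = x \<and> f x \<le> (f \<circ> snd) y"
        proof
          fix z assume z: "z \<in> F"
          then have "(Nf z, z) \<in> (SIGMA N:{..K}. A N)" using Nf[OF z] Kb[OF z] by simp
          then show "\<exists>y\<in>(SIGMA N:{..K}. A N). snd y = z \<and> f z \<le> (f \<circ> snd) y"
            by (intro bexI[of _ "(Nf z, z)"]) auto
        qed
      qed (rule F(1))
      also have "\<dots> = (\<Sum>N\<le>K. sum f (A N))"
      proof -
        have "(\<Sum>N\<le>K. \<Sum>z\<in>A N. f z) = (\<Sum>(N,z)\<in>(SIGMA N:{..K}. A N). f z)"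
          by (rule sum.Sigma) (auto simp: finA)
        then show ?thesis by (simp add: comp_def split_def)
      qed
      also have "\<dots> \<le> (\<Sum>N\<le>K. e * (1/2)^(Suc N))"
      proof (rule sum_mono)
        fix N
        have "e / 2^(Suc N) = e * (1/2)^(Suc N)" by (simp only: power_one_over) simp
        then show "sum f (A N) \<le> e * (1/2)^(Suc N)" using sumA[of N] by linarith
      qed
      also have "\<dots> = e * (1 - (1/2)^(Suc K))"
        by (subst sum_distrib_left[symmetric]) (subst half_pow_sum, rule refl)
      also have "\<dots> \<le> e"
      proof -
        have "e * (1/2::real)^(Suc K) \<ge> 0" using e by simp
        then show ?thesis by (simp add: right_diff_distrib)
      qed
      finally have "sum f F \<le> e" .
      moreover have "sum (\<lambda>(x,k). ennreal (exp (- s * real k))) F = ennreal (sum f F)"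
      proof -
        have "sum (\<lambda>(x,k). ennreal (exp (- s * real k))) F = sum (\<lambda>z. ennreal (f z)) F"
          by (intro sum.cong) (auto simp: f_def)
        also have "\<dots> = ennreal (sum f F)" by (rule sum_ennreal) (auto simp: f_def)
        finally show ?thesis .
      qed
      ultimately show "sum (\<lambda>(x,k). ennreal (exp (- s * real k))) F \<le> ennreal e"
        by (simp only:) (rule ennreal_leI)
    qed
    finally show ?thesis .
  qed
  have "C \<in> {C. countable C \<and> C \<subseteq> Sigma m \<times> {n0..} \<and> E \<subseteq> (\<Union>(x,k)\<in>C. bowen_ball m k x eps)}"
    using Cc Csub Ecov by blast
  then show ?thesis unfolding bowen_Hn_def by (rule INF_lower2) (rule sumle)
qed

lemma htop_eps_upper:
  assumes m: "m \<ge> 1" and eps: "eps > 0" and EZ: "E \<subseteq> Sigma m"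
  and good: "\<And>\<delta> x. \<delta> > 0 \<Longrightarrow> x \<in> E \<Longrightarrow> \<exists>N. \<forall>n\<ge>N. H1 m (fr n x) \<le> h + \<delta>"
  shows "htop_eps m E eps \<le> ereal h"
proof -
  have H0: "bowen_H m E s eps = 0" if "s > h" for s
  proof -
    define \<delta> where "\<delta> = (s - h) / 2"
    have d: "\<delta> > 0" using that by (simp add: \<delta>_def)
    have s: "s = h + 2*\<delta>" by (simp add: \<delta>_def field_simps)
    have "bowen_Hn m E s eps n = 0" for n
    proof -
      have "bowen_Hn m E s eps n \<le> 0 + ennreal e" if "e > 0" for e
        using Hn_small[OF m eps EZ d good[OF d] s that] by simp
      then have "bowen_Hn m E s eps n \<le> 0" by (rule ennreal_le_epsilon) auto
      then show ?thesis by simp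
    qed
    then show ?thesis by (simp add: bowen_H_SUP)
  qed
  show ?thesis
  proof (rule ereal_le_epsilon2)
    fix e :: real assume "e > 0"
    then have "bowen_H m E (h + e) eps = 0" using H0 by simp
    then have "htop_eps m E eps \<le> ereal (h + e)" unfolding htop_eps_def by (intro Inf_lower) blast
    then show "htop_eps m E eps \<le> ereal h + ereal e" by simp
  qed
qed


lemma meas_bmarg: "(g :: nat \<Rightarrow> real) \<in> borel_measurable (bmarg m p)"
  unfolding bmarg_def by (simp add: measurable_count_space_eq1)

lemma coord_meas: "(\<lambda>x. x i) \<in> measurable (bernoulli m p) (bmarg m p)"
  unfolding bernoulli_alt by (rule measurable_component_singleton) simp

lemma cnt_sum: "real (cnt n x j) = (\<Sum>i\<in>{1..n}. if x i = j then 1 else 0)"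
  unfolding cnt_def real_of_card by (rule sum.inter_filter) simp

lemma cnt_meas: "(\<lambda>x. real (cnt n x j)) \<in> borel_measurable (bernoulli m p)"
proof -
  have "(\<lambda>x. (\<lambda>a. if a = j then 1 else 0::real) (x i)) \<in> borel_measurable (bernoulli m p)" for i
    by (rule measurable_compose[OF coord_meas meas_bmarg])
  then show ?thesis unfolding cnt_sum by (intro borel_measurable_sum) auto
qed

lemma indep_coords:
  assumes pv: "prob_vec m p"
  shows "prob_space.indep_vars (bernoulli m p) (\<lambda>_. bmarg m p) (\<lambda>i x. x i) UNIV"
proof -
  interpret bm: prob_space "bmarg m p" using prob_space_bmarg[OF pv] .
  interpret P: product_prob_space "\<lambda>_. bmarg m p" UNIV by unfold_locales
  interpret M: prob_space "bernoulli m p" using prob_space_bernoulli[OF pv] .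
  show ?thesis
  proof (subst M.indep_vars_iff_distr_eq_PiM)
    show "distr (bernoulli m p) (PiM UNIV (\<lambda>_. bmarg m p)) (\<lambda>x. \<lambda>i\<in>UNIV. x i) =
          PiM UNIV (\<lambda>i. distr (bernoulli m p) (bmarg m p) (\<lambda>x. x i))"
    proof -
      have "(\<lambda>x. \<lambda>i\<in>UNIV. x i) = (\<lambda>x::nat\<Rightarrow>nat. x)" by (auto simp: restrict_def)
      then have "distr (bernoulli m p) (PiM UNIV (\<lambda>_. bmarg m p)) (\<lambda>x. \<lambda>i\<in>UNIV. x i) = bernoulli m p"
        by (simp add: bernoulli_alt distr_id)
      moreover have "distr (bernoulli m p) (bmarg m p) (\<lambda>x. x i) = bmarg m p" for i
        unfolding bernoulli_alt by (rule P.PiM_component) simp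
      ultimately show ?thesis by (simp add: bernoulli_alt)
    qed
  qed (auto intro: coord_meas)
qed

lemma hoeffding_cnt:
  assumes pv: "prob_vec m p" and n: "n \<ge> 1" and t: "t \<ge> 0" and j: "j < m"
  shows "measure (bernoulli m p) {x\<in>space (bernoulli m p). \<bar>real (cnt n x j) - real n * p j\<bar> \<ge> t}
         \<le> 2 * exp (-2 * t\<^sup>2 / real n)"
proof -
  interpret bm: prob_space "bmarg m p" using prob_space_bmarg[OF pv] .
  interpret M: prob_space "bernoulli m p" using prob_space_bernoulli[OF pv] .
  define X where "X i x = (if x i = j then 1 else 0::real)" for i and x :: "nat \<Rightarrow> nat"
  have ind: "M.indep_vars (\<lambda>_. borel) X {1..n}"
  proof -
    have "M.indep_vars (\<lambda>_. borel) (\<lambda>i x. (\<lambda>a. if a = j then 1 else 0::real) (x i)) UNIV"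
      by (rule M.indep_vars_compose2[OF indep_coords[OF pv]]) (rule meas_bmarg)
    then show ?thesis unfolding X_def by (rule M.indep_vars_subset) simp
  qed
  have EX: "M.expectation (X i) = p j" for i
  proof -
    have "M.expectation (X i) = integral\<^sup>L (bernoulli m p) (\<lambda>x. (\<lambda>a. if a = j then 1 else 0::real) (x i))"
      by (rule arg_cong[where f="M.expectation"]) (simp add: X_def fun_eq_iff)
    also have "\<dots> = integral\<^sup>L (bmarg m p) (\<lambda>a. if a = j then 1 else 0::real)"
    proof -
      interpret P: product_prob_space "\<lambda>_. bmarg m p" UNIV by unfold_locales
      have "integral\<^sup>L (bernoulli m p) (\<lambda>x. (\<lambda>a. if a = j then 1 else 0::real) (x i)) =
            integral\<^sup>L (distr (bernoulli m p) (bmarg m p) (\<lambda>x. x i)) (\<lambda>a. if a = j then 1 else 0::real)"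
        by (subst integral_distr) (auto intro: coord_meas meas_bmarg)
      also have "distr (bernoulli m p) (bmarg m p) (\<lambda>x. x i) = bmarg m p"
        unfolding bernoulli_alt by (rule P.PiM_component) simp
      finally show ?thesis .
    qed
    also have "\<dots> = (\<Sum>a<m. (if a = j then 1 else 0) * p a)" by (rule integral_bmarg[OF pv])
    also have "\<dots> = (\<Sum>a<m. if a = j then p j else 0)" by (intro sum.cong) auto
    also have "\<dots> = p j" using j by simp
    finally show ?thesis .
  qed
  interpret H: Hoeffding_ineq "bernoulli m p" "{1..n}" X "\<lambda>_. 0" "\<lambda>_. 1" "real n * p j"
  proof unfold_locales
    show "AE x in bernoulli m p. X i x \<in> {0..1}" for i by (intro AE_I2) (simp add: X_def)
    show "real n * p j \<equiv> \<Sum>i\<in>{1..n}. M.expectation (X i)" by (simp add: EX)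
  qed (use ind in simp_all)
  have "M.prob {x\<in>space (bernoulli m p). \<bar>(\<Sum>i\<in>{1..n}. X i x) - real n * p j\<bar> \<ge> t}
        \<le> 2 * exp (-2 * t\<^sup>2 / (\<Sum>i\<in>{1..n}. (1 - 0)\<^sup>2))"
    by (rule H.Hoeffding_ineq_abs_ge[OF t]) (use n in simp)
  moreover have "(\<Sum>i\<in>{1..n}. X i x) = real (cnt n x j)" for x by (simp add: cnt_sum X_def)
  ultimately show ?thesis by simp
qed


lemma cyl_measure:
  assumes pv: "prob_vec m p" and y: "y \<in> Sigma m"
  shows "emeasure (bernoulli m p) {z \<in> space (bernoulli m p). \<forall>i\<in>{..<k}. z i \<in> {y i}} = ennreal (\<Prod>i<k. p (y i))"
proof -
  interpret bm: prob_space "bmarg m p" using prob_space_bmarg[OF pv] .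
  interpret P: product_prob_space "\<lambda>_. bmarg m p" UNIV by unfold_locales
  have yi: "y i < m" for i using y by (simp add: Sigma_def)
  have "emeasure (bernoulli m p) {z \<in> space (bernoulli m p). \<forall>i\<in>{..<k}. z i \<in> {y i}} = (\<Prod>i<k. emeasure (bmarg m p) {y i})"
    unfolding bernoulli_alt by (rule P.emeasure_PiM_Collect) (auto simp: yi)
  also have "\<dots> = (\<Prod>i<k. ennreal (p (y i)))"
  proof (intro prod.cong refl)
    fix i
    show "emeasure (bmarg m p) {y i} = ennreal (p (y i))"
      unfolding bmarg_def using yi[of i] by (simp add: emeasure_density nn_integral_count_space_finite)
  qed
  also have "\<dots> = ennreal (\<Prod>i<k. p (y i))"
    using pv yi by (intro prod_ennreal) (auto simp: prob_vec_def)
  finally show ?thesis .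
qed

definition dl :: "nat \<Rightarrow> real" where "dl n = sqrt (ln (real (Suc n)) / real n)"

lemma dl_lim: "dl \<longlonglongrightarrow> 0"
  unfolding dl_def by real_asymp

lemma bad_measure:
  assumes pv: "prob_vec m p" and n: "n \<ge> 1"
  shows "measure (bernoulli m p) {x\<in>space (bernoulli m p). \<exists>j<m. \<bar>real (cnt n x j) - real n * p j\<bar> \<ge> real n * dl n}
         \<le> 2 * real m / real (Suc n)^2"
proof -
  interpret M: prob_space "bernoulli m p" using prob_space_bernoulli[OF pv] .
  define B where "B j = {x\<in>space (bernoulli m p). \<bar>real (cnt n x j) - real n * p j\<bar> \<ge> real n * dl n}" for j
  have Bm: "B j \<in> sets (bernoulli m p)" for j unfolding B_def using cnt_meas[of n j m p] by measurable
  have t: "real n * dl n \<ge> 0" by (simp add: dl_def)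
  have e: "exp (-2 * (real n * dl n)\<^sup>2 / real n) = 1 / real (Suc n)^2"
  proof -
    have "(real n * dl n)\<^sup>2 = real n^2 * (ln (real (Suc n)) / real n)"
      unfolding dl_def using n by (simp add: power_mult_distrib)
    then have "-2 * (real n * dl n)\<^sup>2 / real n = -2 * ln (real (Suc n))" using n by (simp add: power2_eq_square)
    then have "exp (-2 * (real n * dl n)\<^sup>2 / real n) = exp (- (2 * ln (real (Suc n))))" by simp
    also have "\<dots> = inverse (exp (ln (real (Suc n)) * 2))" by (simp add: exp_minus mult.commute)
    also have "exp (ln (real (Suc n)) * 2) = real (Suc n)^2"
    proof -
      have "exp (ln (real (Suc n)) * 2) = exp (ln (real (Suc n)) + ln (real (Suc n)))" by (simp add: mult_2_right)
      also have "\<dots> = real (Suc n) * real (Suc n)" by (simp only: exp_add) simp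
      finally show ?thesis by (simp add: power2_eq_square)
    qed
    finally show ?thesis by (simp add: inverse_eq_divide)
  qed
  have "{x\<in>space (bernoulli m p). \<exists>j<m. \<bar>real (cnt n x j) - real n * p j\<bar> \<ge> real n * dl n} = (\<Union>j\<in>{..<m}. B j)"
    by (auto simp: B_def)
  also have "M.prob \<dots> \<le> (\<Sum>j<m. M.prob (B j))" by (rule measure_UNION_le) (auto simp: Bm)
  also have "\<dots> \<le> (\<Sum>j<m. 2 * (1 / real (Suc n)^2))"
  proof (rule sum_mono)
    fix j assume "j \<in> {..<m}"
    then show "M.prob (B j) \<le> 2 * (1 / real (Suc n)^2)"
      unfolding B_def using hoeffding_cnt[OF pv n t] e by simp
  qed
  also have "\<dots> = 2 * real m / real (Suc n)^2" by simp
  finally show ?thesis .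
qed


lemma summable_b: "summable (\<lambda>n. 2 * real m / real (Suc n)^2)"
proof -
  have "summable (\<lambda>n. inverse (real n ^ 2))" by (rule inverse_power_summable) simp
  then have "summable (\<lambda>n. inverse (real (Suc n) ^ 2))" by (subst summable_Suc_iff)
  then have "summable (\<lambda>n. (2 * real m) * inverse (real (Suc n) ^ 2))" by (rule summable_mult)
  then show ?thesis by (simp add: divide_inverse)
qed

lemma good_set:
  assumes pv: "prob_vec m p"
  shows "\<exists>G N. G \<in> sets (bernoulli m p) \<and> emeasure (bernoulli m p) G \<ge> ennreal (1/2) \<and> N \<ge> 1 \<and>
            (\<forall>x\<in>G. x \<in> Sigma m \<and> (\<forall>n\<ge>N. \<forall>j<m. \<bar>fr n x j - p j\<bar> < dl n))"
proof -
  interpret M: prob_space "bernoulli m p" using prob_space_bernoulli[OF pv] .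
  define b where "b n = 2 * real m / real (Suc n)^2" for n
  have bs: "summable b" unfolding b_def by (rule summable_b)
  obtain N0 where N0: "\<forall>n\<ge>N0. norm (\<Sum>i. b (i + n)) < 1/2"
    using suminf_exist_split[OF _ bs, of "1/2"] by auto
  define N where "N = N0 + 1"
  define Bad where "Bad n = {x\<in>space (bernoulli m p). \<exists>j<m. \<bar>real (cnt n x j) - real n * p j\<bar> \<ge> real n * dl n}" for n
  have Badm: "Bad n \<in> sets (bernoulli m p)" for n
  proof -
    have "Bad n = (\<Union>j\<in>{..<m}. {x\<in>space (bernoulli m p). \<bar>real (cnt n x j) - real n * p j\<bar> \<ge> real n * dl n})"
      by (auto simp: Bad_def)
    also have "\<dots> \<in> sets (bernoulli m p)"
    proof (intro sets.finite_UN)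
      fix j
      show "{x\<in>space (bernoulli m p). \<bar>real (cnt n x j) - real n * p j\<bar> \<ge> real n * dl n} \<in> sets (bernoulli m p)"
        using cnt_meas[of n j m p] by measurable
    qed auto
    finally show ?thesis .
  qed
  define U where "U = (\<Union>k. Bad (k + N))"
  have Um: "U \<in> sets (bernoulli m p)" unfolding U_def using Badm by auto
  have "emeasure (bernoulli m p) U \<le> (\<Sum>k. emeasure (bernoulli m p) (Bad (k + N)))"
    unfolding U_def by (rule emeasure_subadditive_countably) (auto simp: Badm)
  also have "\<dots> \<le> (\<Sum>k. ennreal (b (k + N)))"
  proof (intro suminf_le summableI)
    fix k
    have "M.prob (Bad (k + N)) \<le> b (k + N)"
      unfolding Bad_def b_def by (rule bad_measure[OF pv]) (simp add: N_def)
    then show "emeasure (bernoulli m p) (Bad (k + N)) \<le> ennreal (b (k + N))"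
      by (simp add: M.emeasure_eq_measure ennreal_leI)
  qed
  also have "\<dots> = ennreal (\<Sum>k. b (k + N))"
    by (rule suminf_ennreal2) (simp add: b_def, rule summable_ignore_initial_segment[OF bs])
  also have "\<dots> \<le> ennreal (1/2)"
  proof -
    have "norm (\<Sum>i. b (i + N)) < 1/2" using N0[rule_format, of N] by (simp add: N_def)
    then show ?thesis by (intro ennreal_leI) simp
  qed
  finally have "emeasure (bernoulli m p) U \<le> ennreal (1/2)" .
  then have "ennreal (M.prob U) \<le> ennreal (1/2)" by (simp only: M.emeasure_eq_measure)
  then have "M.prob U \<le> 1/2" by (subst (asm) ennreal_le_iff) auto
  define G where "G = space (bernoulli m p) - U"
  have Gm: "G \<in> sets (bernoulli m p)" unfolding G_def using Um by auto
  have "M.prob G = 1 - M.prob U" unfolding G_def by (rule M.prob_compl[OF Um])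
  then have "M.prob G \<ge> 1/2" using \<open>M.prob U \<le> 1/2\<close> by simp
  then have GE: "emeasure (bernoulli m p) G \<ge> ennreal (1/2)" by (simp only: M.emeasure_eq_measure ennreal_leI)
  have Gprop: "x \<in> Sigma m \<and> (\<forall>n\<ge>N. \<forall>j<m. \<bar>fr n x j - p j\<bar> < dl n)" if "x \<in> G" for x
  proof (intro conjI allI impI)
    show xS: "x \<in> Sigma m" using that by (simp add: G_def space_bernoulli)
    fix n j assume n: "n \<ge> N" and j: "j < m"
    have "x \<notin> Bad n"
    proof -
      have "x \<notin> Bad ((n - N) + N)" using that by (auto simp: G_def U_def)
      then show ?thesis using n by simp
    qed
    then have "\<bar>real (cnt n x j) - real n * p j\<bar> < real n * dl n"
      using xS j by (auto simp: Bad_def space_bernoulli)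
    moreover have "real n > 0" using n by (simp add: N_def)
    ultimately have "\<bar>real (cnt n x j) - real n * p j\<bar> / real n < dl n"
      by (simp add: divide_less_eq mult.commute)
    moreover have "\<bar>real (cnt n x j) - real n * p j\<bar> / real n = \<bar>fr n x j - p j\<bar>"
    proof -
      have "(real (cnt n x j) - real n * p j) / real n = fr n x j - p j"
        using \<open>real n > 0\<close> by (simp add: fr_def diff_divide_distrib)
      moreover have "\<bar>real (cnt n x j) - real n * p j\<bar> / real n = \<bar>(real (cnt n x j) - real n * p j) / real n\<bar>"
        using \<open>real n > 0\<close> by simp
      ultimately show ?thesis by simp
    qed
    ultimately show "\<bar>fr n x j - p j\<bar> < dl n" by simp
  qed
  show ?thesis using Gm GE Gprop by (intro exI[of _ G] exI[of _ N]) (auto simp: N_def)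
qed


lemma emeasure_UN_le_SUP:
  assumes I: "countable I" and A: "\<And>i. i \<in> I \<Longrightarrow> A i \<in> sets M"
  shows "emeasure M (\<Union>i\<in>I. A i) \<le> (SUP F\<in>{F. finite F \<and> F \<subseteq> I}. \<Sum>i\<in>F. emeasure M (A i))"
proof (cases "I = {}")
  case True then show ?thesis by simp
next
  case False
  define f where "f = from_nat_into I"
  have rf: "range f = I" unfolding f_def using False I by simp
  define B where "B n = (\<Union>i\<in>f ` {..<n}. A i)" for n
  have Bm: "range B \<subseteq> sets M" using A rf by (auto simp: B_def)
  have inc: "incseq B" unfolding B_def incseq_def by (auto intro: order_less_le_trans)
  have "(\<Union>i\<in>I. A i) = (\<Union>n. B n)"
  proof
    show "(\<Union>i\<in>I. A i) \<subseteq> (\<Union>n. B n)"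
    proof
      fix x assume "x \<in> (\<Union>i\<in>I. A i)"
      then obtain i where "i \<in> I" "x \<in> A i" by blast
      then obtain k where "i = f k" using rf by blast
      then have "x \<in> B (Suc k)" using \<open>x \<in> A i\<close> by (auto simp: B_def)
      then show "x \<in> (\<Union>n. B n)" by blast
    qed
    show "(\<Union>n. B n) \<subseteq> (\<Union>i\<in>I. A i)" using rf by (auto simp: B_def)
  qed
  then have "emeasure M (\<Union>i\<in>I. A i) = (SUP n. emeasure M (B n))"
    using SUP_emeasure_incseq[OF Bm inc] by simp
  also have "\<dots> \<le> (SUP F\<in>{F. finite F \<and> F \<subseteq> I}. \<Sum>i\<in>F. emeasure M (A i))"
  proof (rule SUP_least)
    fix n
    have "emeasure M (B n) \<le> (\<Sum>i\<in>f ` {..<n}. emeasure M (A i))"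
      unfolding B_def by (rule emeasure_subadditive_finite) (use A rf in auto)
    also have "\<dots> \<le> (SUP F\<in>{F. finite F \<and> F \<subseteq> I}. \<Sum>i\<in>F. emeasure M (A i))"
      by (rule SUP_upper) (use rf in auto)
    finally show "emeasure M (B n) \<le> \<dots>" .
  qed
  finally show ?thesis .
qed

lemma prod_le_exp_ln:
  assumes "finite I" "\<And>i. i \<in> I \<Longrightarrow> a i \<ge> (0::real)"
  shows "(\<Prod>i\<in>I. a i) \<le> exp (\<Sum>i\<in>I. ln (a i))"
proof (cases "\<exists>i\<in>I. a i = 0")
  case True
  then have "(\<Prod>i\<in>I. a i) = 0" using assms(1) by (auto intro: prod_zero)
  then show ?thesis by simp
next
  case False
  then have pos: "\<And>i. i \<in> I \<Longrightarrow> a i > 0" using assms(2) by force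
  have "exp (\<Sum>i\<in>I. ln (a i)) = (\<Prod>i\<in>I. exp (ln (a i)))" by (simp add: exp_sum assms(1))
  also have "\<dots> = (\<Prod>i\<in>I. a i)" using pos by (intro prod.cong) auto
  finally show ?thesis by simp
qed

lemma prod_block_bound:
  assumes pv: "prob_vec m p" and xS: "x \<in> Sigma m" and n: "n \<ge> 1"
    and close: "\<And>j. j < m \<Longrightarrow> \<bar>fr n x j - p j\<bar> \<le> d"
  shows "(\<Prod>i\<in>{1..n}. p (x i)) \<le> exp (- real n * (H1 m p - d * (\<Sum>j<m. \<bar>ln (p j)\<bar>)))"
proof -
  have xi: "x ` {1..n} \<subseteq> {..<m}" using xS by (auto simp: Sigma_def)
  have p0: "p (x i) \<ge> 0" for i using pv xS by (auto simp: prob_vec_def Sigma_def)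
  have "(\<Prod>i\<in>{1..n}. p (x i)) \<le> exp (\<Sum>i\<in>{1..n}. ln (p (x i)))"
    by (rule prod_le_exp_ln) (auto intro: p0)
  also have "(\<Sum>i\<in>{1..n}. ln (p (x i))) = (\<Sum>j<m. ln (p j) * real (cnt n x j))"
    using sum_fiber[OF _ xi, of "\<lambda>a. ln (p a)"] by (simp add: cnt_def)
  also have "\<dots> = real n * (\<Sum>j<m. fr n x j * ln (p j))"
    using n by (simp add: fr_def sum_distrib_left field_simps)
  also have "\<dots> \<le> real n * (- H1 m p + d * (\<Sum>j<m. \<bar>ln (p j)\<bar>))"
  proof (rule mult_left_mono)
    have "fr n x j * ln (p j) \<le> p j * ln (p j) + d * \<bar>ln (p j)\<bar>" if "j < m" for j
    proof -
      have "fr n x j * ln (p j) = p j * ln (p j) + (fr n x j - p j) * ln (p j)" by (simp add: algebra_simps)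
      also have "(fr n x j - p j) * ln (p j) \<le> \<bar>fr n x j - p j\<bar> * \<bar>ln (p j)\<bar>"
        by (metis abs_ge_self abs_mult)
      also have "\<dots> \<le> d * \<bar>ln (p j)\<bar>" using close[OF that] by (intro mult_right_mono) auto
      finally show ?thesis by simp
    qed
    then have "(\<Sum>j<m. fr n x j * ln (p j)) \<le> (\<Sum>j<m. p j * ln (p j) + d * \<bar>ln (p j)\<bar>)"
      by (intro sum_mono) auto
    also have "\<dots> = - H1 m p + d * (\<Sum>j<m. \<bar>ln (p j)\<bar>)"
      by (simp add: H1_alt sum.distrib sum_distrib_left)
    finally show "(\<Sum>j<m. fr n x j * ln (p j)) \<le> - H1 m p + d * (\<Sum>j<m. \<bar>ln (p j)\<bar>)" .
  qed simp
  finally show ?thesis by (simp add: algebra_simps)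
qed

lemma prod_drop_first:
  fixes k :: nat and a :: "nat \<Rightarrow> real"
  assumes "\<And>i. 0 \<le> a i" "\<And>i. a i \<le> (1::real)" "k \<ge> 1"
  shows "(\<Prod>i<k. a i) \<le> (\<Prod>i\<in>{1..k-1}. a i)"
proof -
  have sub: "{1..k-1} \<subseteq> {..<k}"
  proof
    fix x assume "x \<in> {1..k-1}"
    then have "x \<le> k - 1" by simp
    then show "x \<in> {..<k}" using assms(3) by simp
  qed
  have "(\<Prod>i<k. a i) = (\<Prod>i\<in>{..<k} - {1..k-1}. a i) * (\<Prod>i\<in>{1..k-1}. a i)"
    by (rule prod.subset_diff[OF sub]) simp
  also have "\<dots> \<le> 1 * (\<Prod>i\<in>{1..k-1}. a i)"
    by (intro mult_right_mono prod_le_1 prod_nonneg) (auto simp: assms)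
  finally show ?thesis by simp
qed


lemma cyl_sets:
  assumes y: "y \<in> Sigma m"
  shows "{z \<in> space (bernoulli m p). \<forall>i\<in>{..<k}. z i \<in> {y i}} \<in> sets (bernoulli m p)"
proof (rule sets.sets_Collect_finite_All)
  fix i
  have "{z \<in> space (bernoulli m p). z i \<in> {y i}} = (\<lambda>z. z i) -` {y i} \<inter> space (bernoulli m p)" by auto
  also have "\<dots> \<in> sets (bernoulli m p)"
    by (rule measurable_sets[OF coord_meas]) (use y in \<open>simp add: Sigma_def\<close>)
  finally show "{z \<in> space (bernoulli m p). z i \<in> {y i}} \<in> sets (bernoulli m p)" .
qed simp

lemma htop_eps_lower:
  assumes pv: "prob_vec m p" and eps: "0 < eps" "eps \<le> 1"
  and inE: "\<And>x. x \<in> Sigma m \<Longrightarrow> (\<forall>j<m. (\<lambda>n. fr n x j) \<longlonglongrightarrow> p j) \<Longrightarrow> x \<in> E"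
  shows "ereal (H1 m p) \<le> htop_eps m E eps"
proof -
  define h where "h = H1 m p"
  define Lam where "Lam = (\<Sum>j<m. \<bar>ln (p j)\<bar>)"
  obtain G N where Gm: "G \<in> sets (bernoulli m p)" and GE: "emeasure (bernoulli m p) G \<ge> ennreal (1/2)"
    and N: "N \<ge> 1" and Gp: "\<And>x. x \<in> G \<Longrightarrow> x \<in> Sigma m \<and> (\<forall>n\<ge>N. \<forall>j<m. \<bar>fr n x j - p j\<bar> < dl n)"
    using good_set[OF pv] by blast
  have GinE: "G \<subseteq> E"
  proof
    fix x assume x: "x \<in> G"
    have "(\<lambda>n. fr n x j) \<longlonglongrightarrow> p j" if j: "j < m" for j
    proof (rule LIM_zero_cancel, rule Lim_null_comparison[OF _ dl_lim])
      show "eventually (\<lambda>n. norm (fr n x j - p j) \<le> dl n) sequentially"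
        using Gp[OF x] j unfolding eventually_sequentially by (intro exI[of _ N]) (auto intro: less_imp_le)
    qed
    then show "x \<in> E" using inE Gp[OF x] by blast
  qed
  have key: "bowen_H m E s eps \<noteq> 0" if s: "s < h" for s
  proof -
    define s' where "s' = (h + s) / 2"
    have ss': "s \<le> s'" using s by (simp add: s'_def)
    have "(\<lambda>n. dl n * Lam) \<longlonglongrightarrow> 0 * Lam" by (intro tendsto_mult dl_lim tendsto_const)
    then have "eventually (\<lambda>n. dl n * Lam < (h - s)/2) sequentially"
      using s by (intro order_tendstoD(2)) auto
    then obtain N1 where N1: "\<And>n. n \<ge> N1 \<Longrightarrow> dl n * Lam < (h - s)/2" by (auto simp: eventually_sequentially)
    define N' where "N' = max N N1"
    have cylb: "emeasure (bernoulli m p) {z \<in> space (bernoulli m p). \<forall>i\<in>{..<k}. z i \<in> {y i}}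
                \<le> ennreal (exp s' * exp (- s * real k))" if y: "y \<in> G" and k: "k \<ge> N' + 1" for y k
    proof -
      have yS: "y \<in> Sigma m" using Gp[OF y] by blast
      have ya: "y i < m" for i using yS by (simp add: Sigma_def)
      have p01: "0 \<le> p (y i)" "p (y i) \<le> 1" for i using prob_vec_01[OF pv ya[of i]] by auto
      have "(\<Prod>i<k. p (y i)) \<le> (\<Prod>i\<in>{1..k-1}. p (y i))"
        by (rule prod_drop_first) (use p01 k in auto)
      also have "\<dots> \<le> exp (- real (k-1) * (h - dl (k-1) * Lam))"
        unfolding h_def Lam_def
      proof (rule prod_block_bound[OF pv yS])
        show "1 \<le> k - 1" using k N by (simp add: N'_def)
        fix j assume "j < m"
        then show "\<bar>fr (k - 1) y j - p j\<bar> \<le> dl (k - 1)"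
          using Gp[OF y] k by (auto simp: N'_def intro: less_imp_le)
      qed
      also have "\<dots> \<le> exp (- real (k-1) * s')"
      proof -
        have "dl (k-1) * Lam < (h - s)/2" using N1[of "k-1"] k by (simp add: N'_def)
        then have "h - dl (k-1) * Lam \<ge> s'" by (simp add: s'_def field_simps)
        then have "real (k-1) * s' \<le> real (k-1) * (h - dl (k-1) * Lam)" by (rule mult_left_mono) simp
        then show ?thesis by simp
      qed
      also have "\<dots> = exp s' * exp (- s' * real k)"
      proof -
        have "real (k-1) = real k - 1" using k by (simp add: of_nat_diff)
        then have "- real (k-1) * s' = s' + (- s' * real k)" by (simp add: algebra_simps)
        then show ?thesis by (simp only: exp_add)
      qed
      also have "\<dots> \<le> exp s' * exp (- s * real k)"
        using ss' by (intro mult_left_mono) (auto intro: mult_right_mono)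
      finally have "(\<Prod>i<k. p (y i)) \<le> exp s' * exp (- s * real k)" .
      then show ?thesis using cyl_measure[OF pv yS, of k] by (simp add: ennreal_leI)
    qed
    have Hbound: "bowen_Hn m E s eps n0 \<ge> ennreal (exp (- s') / 2)" if n0: "n0 \<ge> N' + 1" for n0
      unfolding bowen_Hn_def
    proof (rule INF_greatest)
      fix C assume "C \<in> {C. countable C \<and> C \<subseteq> Sigma m \<times> {n0..} \<and> E \<subseteq> (\<Union>(x,k)\<in>C. bowen_ball m k x eps)}"
      then have Cc: "countable C" and Cs: "C \<subseteq> Sigma m \<times> {n0..}"
        and Ec: "E \<subseteq> (\<Union>(x,k)\<in>C. bowen_ball m k x eps)" by auto
      define D where "D = {c \<in> C. bowen_ball m (snd c) (fst c) eps \<inter> G \<noteq> {}}"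
      have "\<forall>c\<in>D. \<exists>y. y \<in> bowen_ball m (snd c) (fst c) eps \<inter> G" by (auto simp: D_def)
      then obtain yc where yc: "\<And>c. c \<in> D \<Longrightarrow> yc c \<in> bowen_ball m (snd c) (fst c) eps \<inter> G" by metis
      define Cy where "Cy c = {z \<in> space (bernoulli m p). \<forall>i\<in>{..<snd c}. z i \<in> {yc c i}}" for c
      have Cym: "Cy c \<in> sets (bernoulli m p)" if "c \<in> D" for c
        unfolding Cy_def by (rule cyl_sets) (use Gp yc[OF that] in blast)
      have cov: "G \<subseteq> (\<Union>c\<in>D. Cy c)"
      proof
        fix z assume zG: "z \<in> G"
        then have "z \<in> E" using GinE by blast
        then obtain c where cC: "c \<in> C" and zb: "z \<in> bowen_ball m (snd c) (fst c) eps"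
          using Ec by force
        then have cD: "c \<in> D" using zG by (auto simp: D_def)
        have "z i = yc c i" if "i < snd c" for i
        proof -
          have "z i = fst c i" by (rule ball_subset_cyl[OF eps(2) zb that])
          moreover have "yc c i = fst c i" using yc[OF cD] by (intro ball_subset_cyl[OF eps(2) _ that]) blast
          ultimately show ?thesis by simp
        qed
        moreover have "z \<in> space (bernoulli m p)" using Gp[OF zG] by (simp add: space_bernoulli)
        ultimately have "z \<in> Cy c" by (auto simp: Cy_def)
        then show "z \<in> (\<Union>c\<in>D. Cy c)" using cD by blast
      qed
      have DC: "D \<subseteq> C" by (auto simp: D_def)
      have "ennreal (1/2) \<le> emeasure (bernoulli m p) G" by (rule GE)
      also have "\<dots> \<le> emeasure (bernoulli m p) (\<Union>c\<in>D. Cy c)"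
        by (rule emeasure_mono[OF cov]) (use Cym countable_subset[OF DC Cc] in \<open>auto intro: sets.countable_UN''\<close>)
      also have "\<dots> \<le> (SUP F\<in>{F. finite F \<and> F \<subseteq> D}. \<Sum>c\<in>F. emeasure (bernoulli m p) (Cy c))"
        by (rule emeasure_UN_le_SUP[OF countable_subset[OF DC Cc] Cym])
      also have "\<dots> \<le> ennreal (exp s') * (\<Sum>\<^sub>\<infinity>(x,k)\<in>C. ennreal (exp (- s * real k)))"
      proof (rule SUP_least)
        fix F assume "F \<in> {F. finite F \<and> F \<subseteq> D}"
        then have F: "finite F" "F \<subseteq> D" by auto
        have "(\<Sum>c\<in>F. emeasure (bernoulli m p) (Cy c)) \<le> (\<Sum>c\<in>F. ennreal (exp s') * ennreal (exp (- s * real (snd c))))"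
        proof (rule sum_mono)
          fix c assume cF: "c \<in> F"
          then have cD: "c \<in> D" using F by auto
          have "snd c \<ge> n0" using Cs cD DC by auto
          then have "emeasure (bernoulli m p) (Cy c) \<le> ennreal (exp s' * exp (- s * real (snd c)))"
            unfolding Cy_def using yc[OF cD] n0 by (intro cylb) auto
          then show "emeasure (bernoulli m p) (Cy c) \<le> ennreal (exp s') * ennreal (exp (- s * real (snd c)))"
            by (simp add: ennreal_mult)
        qed
        also have "\<dots> = ennreal (exp s') * (\<Sum>c\<in>F. ennreal (exp (- s * real (snd c))))"
          by (rule sum_distrib_left[symmetric])
        also have "(\<Sum>c\<in>F. ennreal (exp (- s * real (snd c)))) \<le> (\<Sum>\<^sub>\<infinity>(x,k)\<in>C. ennreal (exp (- s * real k)))"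
        proof -
          have "(\<Sum>\<^sub>\<infinity>(x,k)\<in>C. ennreal (exp (- s * real k))) =
                (SUP F\<in>{F. finite F \<and> F \<subseteq> C}. sum (\<lambda>(x,k). ennreal (exp (- s * real k))) F)"
            by (rule nonneg_infsum_complete) auto
          moreover have "sum (\<lambda>(x,k). ennreal (exp (- s * real k))) F \<le>
                (SUP F\<in>{F. finite F \<and> F \<subseteq> C}. sum (\<lambda>(x,k). ennreal (exp (- s * real k))) F)"
            by (rule SUP_upper) (use F DC in auto)
          moreover have "(\<Sum>c\<in>F. ennreal (exp (- s * real (snd c)))) = sum (\<lambda>(x,k). ennreal (exp (- s * real k))) F"
            by (simp add: split_def)
          ultimately show ?thesis by simp
        qed
        then have "ennreal (exp s') * (\<Sum>c\<in>F. ennreal (exp (- s * real (snd c))))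
                  \<le> ennreal (exp s') * (\<Sum>\<^sub>\<infinity>(x,k)\<in>C. ennreal (exp (- s * real k)))"
          by (rule mult_left_mono) simp
        finally show "(\<Sum>c\<in>F. emeasure (bernoulli m p) (Cy c)) \<le> ennreal (exp s') * (\<Sum>\<^sub>\<infinity>(x,k)\<in>C. ennreal (exp (- s * real k)))" .
      qed
      finally have half: "ennreal (1/2) \<le> ennreal (exp s') * (\<Sum>\<^sub>\<infinity>(x,k)\<in>C. ennreal (exp (- s * real k)))" .
      have "ennreal (exp (- s') / 2) = ennreal (exp (- s') * (1/2))" by simp
      also have "\<dots> = ennreal (exp (- s')) * ennreal (1/2)"
        by (rule ennreal_mult) auto
      also have "\<dots> \<le> ennreal (exp (- s')) * (ennreal (exp s') * (\<Sum>\<^sub>\<infinity>(x,k)\<in>C. ennreal (exp (- s * real k))))"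
        by (rule mult_left_mono[OF half]) simp
      also have "\<dots> = ennreal (exp (- s') * exp s') * (\<Sum>\<^sub>\<infinity>(x,k)\<in>C. ennreal (exp (- s * real k)))"
        by (simp add: ennreal_mult mult.assoc)
      also have "exp (- s') * exp s' = 1" by (simp add: exp_minus)
      finally show "ennreal (exp (- s') / 2) \<le> (\<Sum>\<^sub>\<infinity>(x,k)\<in>C. ennreal (exp (- s * real k)))" by simp
    qed
    have "ennreal (exp (- s') / 2) \<le> bowen_Hn m E s eps (N' + 1)" by (rule Hbound) simp
    also have "\<dots> \<le> bowen_H m E s eps" unfolding bowen_H_SUP by (rule SUP_upper) simp
    finally have "0 < bowen_H m E s eps" by (rule order_less_le_trans[rotated]) simp
    then show ?thesis by simp
  qed
  show ?thesis unfolding htop_eps_def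
  proof (rule Inf_greatest)
    fix y assume "y \<in> {ereal s |s. bowen_H m E s eps = 0}"
    then obtain s where ys: "y = ereal s" and H: "bowen_H m E s eps = 0" by blast
    then have "\<not> s < h" using key by blast
    then show "ereal (H1 m p) \<le> y" using ys by (simp add: h_def)
  qed
qed


theorem theorem5p3:
  fixes m r :: nat and phi :: "nat \<Rightarrow> nat \<Rightarrow> real"
  assumes "m \<ge> 2" and "r \<ge> 1"
  shows "(\<forall>p. prob_vec m p \<longrightarrow> Aint m r phi p = (\<Prod>k<r. \<Sum>j<m. phi k j * p j))
       \<and> (\<forall>alpha. E_level m r phi alpha \<noteq> {} \<longrightarrow>
            (\<exists>p. prob_vec m p \<and> Aint m r phi p = alpha
                 \<and> (\<forall>q. prob_vec m q \<and> Aint m r phi q = alpha \<longrightarrow> H1 m q \<le> H1 m p)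
                 \<and> htop m (E_level m r phi alpha) = ereal (H1 m p)))"
proof (intro conjI allI impI)
  fix p assume "prob_vec m p"
  then show "Aint m r phi p = (\<Prod>k<r. \<Sum>j<m. phi k j * p j)" by (rule Aint_eq)
next
  fix alpha assume ne: "E_level m r phi alpha \<noteq> {}"
  define E where "E = E_level m r phi alpha"
  have Edef: "E = {x \<in> Sigma m. (\<lambda>n. Fp m r phi (fr n x)) \<longlonglongrightarrow> alpha}"
    unfolding E_def by (rule E_level_alt)
  have AF: "Aint m r phi q = Fp m r phi q" if "prob_vec m q" for q
    using Aint_eq[OF that] by (simp add: Fp_def)
  obtain x0 where "x0 \<in> E" using ne by (auto simp: E_def)
  then have "x0 \<in> Sigma m" "(\<lambda>n. Fp m r phi (fr n x0)) \<longlonglongrightarrow> alpha" by (auto simp: Edef)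
  then have "\<exists>q. prob_vec m q \<and> Fp m r phi q = alpha" by (rule K_nonempty)
  then obtain p where pv: "prob_vec m p" and pF: "Fp m r phi p = alpha"
    and pmax: "\<forall>q. prob_vec m q \<and> Fp m r phi q = alpha \<longrightarrow> H1 m q \<le> H1 m p"
    using maximizer_exists by blast
  have m1: "m \<ge> 1" using assms by simp
  have upper: "htop_eps m E eps \<le> ereal (H1 m p)" if "eps > 0" for eps
  proof (rule htop_eps_upper[OF m1 that])
    show "E \<subseteq> Sigma m" by (auto simp: Edef)
    fix \<delta> :: real and x assume d: "\<delta> > 0" and xE: "x \<in> E"
    obtain \<eta> where eta: "\<eta> > 0" and etaP: "\<forall>q. prob_vec m q \<and> \<bar>Fp m r phi q - alpha\<bar> < \<eta> \<longrightarrow> H1 m q < H1 m p + \<delta>"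
      using uniform_entropy[OF pmax d] by blast
    have xS: "x \<in> Sigma m" and lim: "(\<lambda>n. Fp m r phi (fr n x)) \<longlonglongrightarrow> alpha" using xE by (auto simp: Edef)
    obtain N where N: "\<forall>n\<ge>N. norm (Fp m r phi (fr n x) - alpha) < \<eta>"
      using LIMSEQ_D[OF lim eta] by blast
    show "\<exists>N. \<forall>n\<ge>N. H1 m (fr n x) \<le> H1 m p + \<delta>"
    proof (intro exI[of _ "N + 1"] allI impI)
      fix n assume n: "n \<ge> N + 1"
      then have "prob_vec m (fr n x)" using fr_prob_vec[OF xS] by simp
      moreover have "\<bar>Fp m r phi (fr n x) - alpha\<bar> < \<eta>" using N n by simp
      ultimately show "H1 m (fr n x) \<le> H1 m p + \<delta>" using etaP by (meson less_imp_le)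
    qed
  qed
  have lower: "ereal (H1 m p) \<le> htop_eps m E eps" if "eps > 0" "eps \<le> 1" for eps
  proof (rule htop_eps_lower[OF pv that])
    fix x assume xS: "x \<in> Sigma m" and l: "\<forall>j<m. (\<lambda>n. fr n x j) \<longlonglongrightarrow> p j"
    have "(\<lambda>n. Fp m r phi (fr n x)) \<longlonglongrightarrow> Fp m r phi p" by (rule Fp_limit[OF l])
    then show "x \<in> E" using xS pF by (simp add: Edef)
  qed
  have ev: "eventually (\<lambda>eps. htop_eps m E eps = ereal (H1 m p)) (at_right 0)"
    unfolding eventually_at_right_field
  proof (intro exI[of _ 1] conjI allI impI)
    fix y :: real assume "0 < y" "y < 1"
    then show "htop_eps m E y = ereal (H1 m p)" using upper[of y] lower[of y] by (intro antisym) auto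
  qed simp
  have "htop m E = ereal (H1 m p)"
    unfolding htop_def by (rule tendsto_Lim) (auto intro: tendsto_eventually[OF ev])
  then show "\<exists>p. prob_vec m p \<and> Aint m r phi p = alpha
                 \<and> (\<forall>q. prob_vec m q \<and> Aint m r phi q = alpha \<longrightarrow> H1 m q \<le> H1 m p)
                 \<and> htop m (E_level m r phi alpha) = ereal (H1 m p)"
    using pv pF pmax AF by (intro exI[of _ p]) (auto simp: E_def)
qed


end
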